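(* Let $\lambda>0$. (a) If $0<p<\infty$ and $w\in\widetilde A_{\infty,\lambda-\frac12}$, then ${\rm BMO}_{\triangle_\lambda}(\mathbb R_+)\hookrightarrow{\rm BMO}_{L^p(w)}(\mathbb R_+)$; i.e. $\|b\|_{{\rm BMO}_{L^p(w)}}\le C\|b\|_{{\rm BMO}_{\triangle_\lambda}}$ with $C$ depending on $p,w,\lambda$. (b) If $1\le p<\infty$ and $w\in\widetilde A_{p,\lambda-\frac12}$, then ${\rm BMO}_{L^p(w)}(\mathbb R_+)\hookrightarrow{\rm BMO}_{\triangle_\lambda}(\mathbb R_+)$; i.e. $\|b\|_{{\rm BMO}_{\triangle_\lambda}}\le C\|b\|_{{\rm BMO}_{L^p(w)}}$ with $C$ depending on $p,w,\lambda$.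
   Context: On $\mathbb R_+=(0,\infty)$, $d\mu(x)=x^{2\lambda}dx$; intervals are $B=(a,b)\subset\mathbb R_+$; $w(E)=\int_Ew\,dx$; $p'=p/(p-1)$; $f_B=\frac1{\mu(B)}\int_Bf\,d\mu$. Weights: for $1<p<\infty$, $w\in\widetilde A_{p,\lambda-\frac12}$ if $\sup_B\big(\frac1{\mu(B)}\int_Bw\,dt\big)\big(\frac1{\mu(B)}\int_Bt^{2\lambda p'}w^{-\frac1{p-1}}dt\big)^{p-1}<\infty$; $w\in\widetilde A_{1,\lambda-\frac12}$ if there is $C$ with $\frac{w(B)}{\mu(B)}\le C\frac{w(x)}{x^{2\lambda}}$ for a.e. $x\in B$, all intervals $B$; $\widetilde A_{\infty,\lambda-\frac12}=\bigcup_{p\ge1}\widetilde A_{p,\lambda-\frac12}$. ${\rm BMO}_{\triangle_\lambda}(\mathbb R_+)$: $f\in L^1_{loc}(\mu)$ with $\|f\|_{{\rm BMO}_{\triangle_\lambda}}=\sup_B\frac1{\mu(B)}\int_B|f-f_B|d\mu<\infty$. ${\rm BMO}_{L^p(w)}(\mathbb R_+)$: $f\in L^1_{loc}(w\,dx)$ with $\|f\|_{{\rm BMO}_{L^p(w)}}=\sup_B\big(\frac1{w(B)}\int_B|f(t)-f_B|^pw(t)dt\big)^{1/p}<\infty$. *)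

theory Defs
  imports "HOL-Analysis.Analysis"
begin

(* Setting: R_+ = (0,inf), d mu(x) = x^(2 lam) dx.  Intervals B = (a,b) with 0 <= a < b < inf. *)

definition epowr :: "ennreal \<Rightarrow> real \<Rightarrow> ennreal" where
  "epowr x r = (if x = \<infinity> then \<infinity> else ennreal (enn2real x powr r))"

definition mu_meas :: "real \<Rightarrow> real \<Rightarrow> real \<Rightarrow> ennreal" where
  "mu_meas lam a b = (\<integral>\<^sup>+ t\<in>{a<..<b}. ennreal (t powr (2*lam)) \<partial>lborel)"

definition w_meas :: "(real \<Rightarrow> real) \<Rightarrow> real \<Rightarrow> real \<Rightarrow> ennreal" where
  "w_meas w a b = (\<integral>\<^sup>+ t\<in>{a<..<b}. ennreal (w t) \<partial>lborel)"

definition mu_avg :: "real \<Rightarrow> (real \<Rightarrow> real) \<Rightarrow> real \<Rightarrow> real \<Rightarrow> real" where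
  "mu_avg lam f a b = (LINT t:{a<..<b}|lborel. f t * t powr (2*lam)) / enn2real (mu_meas lam a b)"

definition is_weight :: "(real \<Rightarrow> real) \<Rightarrow> bool" where
  "is_weight w \<longleftrightarrow> w \<in> borel_measurable lborel \<and>
     (AE t in lborel. 0 < t \<longrightarrow> 0 < w t) \<and>
     (\<forall>a b. 0 < a \<longrightarrow> a < b \<longrightarrow> set_integrable lborel {a<..<b} w)"

definition Ap_tilde :: "real \<Rightarrow> real \<Rightarrow> (real \<Rightarrow> real) \<Rightarrow> bool" where
  "Ap_tilde lam p w \<longleftrightarrow>
     (\<exists>C. \<forall>a b. 0 \<le> a \<longrightarrow> a < b \<longrightarrow>
        w_meas w a b < \<infinity> \<and>
        (\<integral>\<^sup>+ t\<in>{a<..<b}. ennreal (t powr (2*lam*(p/(p-1))) * w t powr (-1/(p-1))) \<partial>lborel) < \<infinity> \<and>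
        (enn2real (w_meas w a b) / enn2real (mu_meas lam a b)) *
        (enn2real (\<integral>\<^sup>+ t\<in>{a<..<b}. ennreal (t powr (2*lam*(p/(p-1))) * w t powr (-1/(p-1))) \<partial>lborel)
           / enn2real (mu_meas lam a b)) powr (p - 1) \<le> C)"

definition A1_tilde :: "real \<Rightarrow> (real \<Rightarrow> real) \<Rightarrow> bool" where
  "A1_tilde lam w \<longleftrightarrow>
     (\<exists>C. \<forall>a b. 0 \<le> a \<longrightarrow> a < b \<longrightarrow>
        (AE x in lborel. x \<in> {a<..<b} \<longrightarrow>
           w_meas w a b / mu_meas lam a b \<le> ennreal (C * w x / x powr (2*lam))))"

definition A_tilde :: "real \<Rightarrow> real \<Rightarrow> (real \<Rightarrow> real) \<Rightarrow> bool" where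
  "A_tilde lam p w = (if p = 1 then A1_tilde lam w else Ap_tilde lam p w)"

definition Ainf_tilde :: "real \<Rightarrow> (real \<Rightarrow> real) \<Rightarrow> bool" where
  "Ainf_tilde lam w \<longleftrightarrow> (\<exists>p\<ge>1. A_tilde lam p w)"

definition bmo_delta_norm :: "real \<Rightarrow> (real \<Rightarrow> real) \<Rightarrow> ennreal" where
  "bmo_delta_norm lam f =
     (SUP B\<in>{(a,b). 0 \<le> a \<and> a < b}.
        (\<integral>\<^sup>+ t\<in>{fst B<..<snd B}. ennreal (\<bar>f t - mu_avg lam f (fst B) (snd B)\<bar> * t powr (2*lam)) \<partial>lborel)
          / mu_meas lam (fst B) (snd B))"

definition BMO_delta :: "real \<Rightarrow> (real \<Rightarrow> real) \<Rightarrow> bool" where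
  "BMO_delta lam f \<longleftrightarrow> f \<in> borel_measurable lborel \<and>
     (\<forall>a b. 0 < a \<longrightarrow> a < b \<longrightarrow> set_integrable lborel {a<..<b} (\<lambda>t. f t * t powr (2*lam))) \<and>
     bmo_delta_norm lam f < \<infinity>"

(* BMO_{L^p(w)} norm (f_B is the mu-average, as in the paper) *)
definition bmo_Lpw_norm :: "real \<Rightarrow> real \<Rightarrow> (real \<Rightarrow> real) \<Rightarrow> (real \<Rightarrow> real) \<Rightarrow> ennreal" where
  "bmo_Lpw_norm lam p w f =
     (SUP B\<in>{(a,b). 0 \<le> a \<and> a < b}.
        epowr ((\<integral>\<^sup>+ t\<in>{fst B<..<snd B}. ennreal (\<bar>f t - mu_avg lam f (fst B) (snd B)\<bar> powr p * w t) \<partial>lborel)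
          / w_meas w (fst B) (snd B)) (1/p))"

definition BMO_Lpw :: "real \<Rightarrow> real \<Rightarrow> (real \<Rightarrow> real) \<Rightarrow> (real \<Rightarrow> real) \<Rightarrow> bool" where
  "BMO_Lpw lam p w f \<longleftrightarrow> f \<in> borel_measurable lborel \<and>
     (\<forall>a b. 0 < a \<longrightarrow> a < b \<longrightarrow> set_integrable lborel {a<..<b} (\<lambda>t. f t * w t)) \<and>
     bmo_Lpw_norm lam p w f < \<infinity>"

end

theory Submission
  imports Defs "HOL-Real_Asymp.Real_Asymp"
begin

definition dy :: "real \<Rightarrow> real \<Rightarrow> nat \<Rightarrow> nat \<Rightarrow> real set" where
  "dy a b k j = {a + real j * (b-a) / 2^k <..< a + (real j + 1) * (b-a) / 2^k}"

lemma dy_sub: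
  assumes "a < b" "j < 2^k"
  shows "dy a b k j \<subseteq> {a<..<b}"
proof -
  have "real j + 1 \<le> 2^k" using assms(2)
    by (metis Suc_leI of_nat_Suc of_nat_le_iff of_nat_numeral of_nat_power add.commute)
  hence "(real j + 1) * (b-a) / 2^k \<le> 2^k * (b-a) / 2^k"
    using assms(1) by (intro divide_right_mono mult_right_mono) auto
  hence 1: "(real j + 1) * (b-a) / 2^k \<le> b - a" by simp
  have 2: "0 \<le> real j * (b-a) / 2^k" using assms by auto
  show ?thesis unfolding dy_def using 1 2 by auto
qed

lemma dy_0: "dy a b 0 0 = {a<..<b}"
  unfolding dy_def by simp

lemma dy_anc:
  assumes "a < b" "k' \<le> k"
  shows "dy a b k j \<subseteq> dy a b k' (j div 2^(k-k'))"
proof -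
  define m where "m = k - k'"
  define q where "q = j div 2^m"
  have k: "k = k' + m" using assms m_def by simp
  have q1: "q * 2^m \<le> j" unfolding q_def by (rule div_times_less_eq_dividend)
  have q2: "j + 1 \<le> (q+1) * 2^m"
  proof -
    have "j mod 2^m < 2^m" by simp
    moreover have "j = q*2^m + j mod 2^m" unfolding q_def by (metis div_mult_mod_eq)
    ultimately have "j + 1 \<le> q*2^m + 2^m" by linarith
    thus ?thesis by (simp add: algebra_simps)
  qed
  have pk: "(2::real)^k = 2^k' * 2^m" by (simp add: k power_add)
  have e1: "a + real q * (b-a) / 2^k' = a + real (q*2^m) * (b-a) / 2^k"
    by (simp add: pk field_simps)
  have e2: "a + (real q + 1) * (b-a) / 2^k' = a + real ((q+1)*2^m) * (b-a) / 2^k"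
    by (simp add: pk field_simps)
  have l1: "a + real (q*2^m) * (b-a) / 2^k \<le> a + real j * (b-a) / 2^k"
    using of_nat_mono[OF q1, where 'a=real] assms(1) by (intro add_left_mono divide_right_mono mult_right_mono) auto
  have l2: "a + (real j + 1) * (b-a) / 2^k \<le> a + real ((q+1)*2^m) * (b-a) / 2^k"
  proof -
    have "real j + 1 \<le> real ((q+1)*2^m)" using q2 by (metis of_nat_Suc of_nat_le_iff Suc_eq_plus1 add.commute)
    thus ?thesis using assms(1) by (intro add_left_mono divide_right_mono mult_right_mono) auto
  qed
  show ?thesis unfolding dy_def m_def[symmetric] q_def[symmetric] using l1 l2 e1 e2 by auto
qed

lemma dy_disj_same:
  assumes "a < b" "j \<noteq> j'"
  shows "dy a b k j \<inter> dy a b k j' = {}"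
proof -
  have *: "dy a b k j \<inter> dy a b k j' = {}" if "j < j'" for j j'
  proof -
    have "real j + 1 \<le> real j'" using that by simp
    hence "(real j + 1) * (b-a) / 2^k \<le> real j' * (b-a) / 2^k"
      using assms(1) by (intro divide_right_mono mult_right_mono) auto
    thus ?thesis unfolding dy_def by auto
  qed
  show ?thesis using assms *[of j j'] *[of j' j] by (cases "j < j'") auto
qed

lemma dy_nest:
  assumes "a < b" "k' \<le> k" "dy a b k j \<inter> dy a b k' j' \<noteq> {}"
  shows "j' = j div 2^(k-k')"
  using dy_anc[OF assms(1,2), of j] dy_disj_same[OF assms(1), of j' "j div 2^(k-k')" k'] assms(3)
  by blast

definition grid :: "real \<Rightarrow> real \<Rightarrow> real set" where
  "grid a b = (\<Union>k::nat. range (\<lambda>m::int. a + real_of_int m * (b-a) / 2^k))"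

lemma countable_grid: "countable (grid a b)"
  unfolding grid_def by auto

lemma grid_null: "grid a b \<in> null_sets lborel"
  using countable_grid by (rule countable_imp_null_set_lborel)

definition idx :: "real \<Rightarrow> real \<Rightarrow> nat \<Rightarrow> real \<Rightarrow> nat" where
  "idx a b k x = nat \<lfloor>(x-a) * 2^k / (b-a)\<rfloor>"

lemma idx_mem:
  assumes "a < b" "x \<in> {a<..<b}" "x \<notin> grid a b"
  shows "x \<in> dy a b k (idx a b k x)" "idx a b k x < 2^k"
proof -
  define y where "y = (x-a) * 2^k / (b-a)"
  have ba: "0 < b - a" using assms(1) by simp
  have y0: "0 < y" unfolding y_def using assms(2) ba by (intro divide_pos_pos mult_pos_pos) auto
  have "(x-a) * 2^k < (b-a) * 2^k" using assms(2) by (intro mult_strict_right_mono) auto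
  hence yb: "y < 2^k" unfolding y_def using ba by (simp add: divide_less_eq)
  have xy: "x = a + y * (b-a) / 2^k" unfolding y_def using ba by simp
  have nint: "y \<noteq> real_of_int \<lfloor>y\<rfloor>"
  proof
    assume h: "y = real_of_int \<lfloor>y\<rfloor>"
    have "x = (\<lambda>m::int. a + real_of_int m * (b-a) / 2^k) \<lfloor>y\<rfloor>" using xy h by simp
    hence "x \<in> range (\<lambda>m::int. a + real_of_int m * (b-a) / 2^k)" by (rule range_eqI)
    hence "x \<in> grid a b" unfolding grid_def by (rule UN_I[OF UNIV_I])
    with assms(3) show False by simp
  qed
  have f0: "0 \<le> \<lfloor>y\<rfloor>" using y0 by simp
  have ri: "real (idx a b k x) = real_of_int \<lfloor>y\<rfloor>" unfolding idx_def y_def[symmetric] using f0 by simp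
  have l: "real_of_int \<lfloor>y\<rfloor> < y" using nint of_int_floor_le[of y] by linarith
  have u: "y < real_of_int \<lfloor>y\<rfloor> + 1" by linarith
  have l': "real (idx a b k x) * (b-a) / 2^k < y * (b-a) / 2^k"
    using l ri ba by (intro divide_strict_right_mono mult_strict_right_mono) auto
  have u': "y * (b-a) / 2^k < (real (idx a b k x) + 1) * (b-a) / 2^k"
    using u ri ba by (intro divide_strict_right_mono mult_strict_right_mono) auto
  show "x \<in> dy a b k (idx a b k x)" unfolding dy_def using l' u' xy by simp
  have "\<lfloor>y\<rfloor> < 2^k" using yb by (simp add: floor_less_iff)
  thus "idx a b k x < 2^k" unfolding idx_def y_def[symmetric] using f0 by (simp add: nat_less_iff)
qed

lemma dy_small:
  assumes "a < b" "x \<in> dy a b k j" "y \<in> dy a b k j"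
  shows "dist y x < (b-a) / 2^k"
proof -
  have "(real j + 1) * (b-a) / 2^k - real j * (b-a) / 2^k = (b-a)/2^k"
    by (simp add: field_simps)
  thus ?thesis using assms unfolding dy_def dist_real_def by auto
qed

definition maxi :: "(nat \<Rightarrow> nat \<Rightarrow> bool) \<Rightarrow> (nat \<times> nat) set" where
  "maxi P = {(k,j). j < 2^k \<and> P k j \<and> (\<forall>k'<k. \<not> P k' (j div 2^(k-k')))}"

lemma countable_maxi: "countable (maxi P)"
  by (rule countable_subset[of _ UNIV]) auto

lemma maxi_disj:
  assumes "a < b" "(k,j) \<in> maxi P" "(k',j') \<in> maxi P" "(k,j) \<noteq> (k',j')"
  shows "dy a b k j \<inter> dy a b k' j' = {}"
proof -
  have *: "dy a b k j \<inter> dy a b k' j' = {}"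
    if h: "(k,j) \<in> maxi P" "(k',j') \<in> maxi P" "(k,j) \<noteq> (k',j')" "k' \<le> k" for k j k' j'
  proof (rule ccontr)
    assume ne: "dy a b k j \<inter> dy a b k' j' \<noteq> {}"
    have e: "j' = j div 2^(k-k')" using dy_nest[OF assms(1) h(4) ne] .
    show False
    proof (cases "k' = k")
      case True thus ?thesis using e h(3) by simp
    next
      case False
      hence "k' < k" using h(4) by simp
      thus ?thesis using h(1,2) e unfolding maxi_def by auto
    qed
  qed
  show ?thesis using assms *[of k j k' j'] *[of k' j' k j] by (cases "k' \<le> k") auto
qed

lemma maxi_cover:
  assumes "a < b" "j < 2^k" "P k j"
  shows "\<exists>k' j'. (k',j') \<in> maxi P \<and> dy a b k j \<subseteq> dy a b k' j'"
proof -
  define k' where "k' = (LEAST k'. P k' (j div 2^(k-k')))"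
  have Pk: "P k (j div 2^(k-k))" using assms by simp
  have P': "P k' (j div 2^(k-k'))" unfolding k'_def by (rule LeastI[of _ k], fact Pk)
  have le: "k' \<le> k" unfolding k'_def by (rule Least_le, fact Pk)
  have notP: "\<not> P k'' (j div 2^(k-k''))" if "k'' < k'" for k''
    using not_less_Least[of k'' "\<lambda>k'. P k' (j div 2^(k-k'))"] that unfolding k'_def by blast
  have dd: "(j div 2^(k-k')) div 2^(k'-k'') = j div 2^(k-k'')" if "k'' < k'" for k''
  proof -
    have "(k-k') + (k'-k'') = k - k''" using le that by simp
    thus ?thesis by (metis div_mult2_eq power_add)
  qed
  have lt: "j div 2^(k-k') < 2^k'"
  proof -
    have "j < 2^k' * 2^(k-k')" using assms(2) le by (metis le_add_diff_inverse power_add)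
    thus ?thesis by (simp add: div_less_iff_less_mult)
  qed
  have "(k', j div 2^(k-k')) \<in> maxi P"
    unfolding maxi_def using P' lt notP dd by auto
  moreover have "dy a b k j \<subseteq> dy a b k' (j div 2^(k-k'))" using dy_anc[OF assms(1) le] .
  ultimately show ?thesis by blast
qed

definition muM :: "real \<Rightarrow> real measure" where
  "muM lam = density lborel (\<lambda>t. ennreal (t powr (2*lam)))"

lemma sets_muM[simp, measurable_cong]: "sets (muM lam) = sets borel"
  unfolding muM_def by simp

lemma space_muM[simp]: "space (muM lam) = UNIV"
  unfolding muM_def by simp

lemma emeasure_muM:
  assumes "A \<in> sets borel"
  shows "emeasure (muM lam) A = (\<integral>\<^sup>+ t\<in>A. ennreal (t powr (2*lam)) \<partial>lborel)"
  unfolding muM_def using assms by (subst emeasure_density) auto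

lemma mu_meas_eq: "mu_meas lam a b = emeasure (muM lam) {a<..<b}"
  unfolding mu_meas_def by (simp add: emeasure_muM)

lemma nn_integral_muM:
  assumes "g \<in> borel_measurable borel"
  shows "(\<integral>\<^sup>+ t. g t \<partial>muM lam) = (\<integral>\<^sup>+ t. ennreal (t powr (2*lam)) * g t \<partial>lborel)"
  unfolding muM_def using assms by (subst nn_integral_density) auto

lemma mu_upper:
  assumes "A \<in> sets borel" "A \<subseteq> {0..b}" "0 \<le> lam"
  shows "emeasure (muM lam) A \<le> ennreal (b powr (2*lam)) * emeasure lborel A"
proof -
  have "emeasure (muM lam) A = (\<integral>\<^sup>+ t. ennreal (t powr (2*lam)) * indicator A t \<partial>lborel)"
    using emeasure_muM[OF assms(1)] by simp
  also have "\<dots> \<le> (\<integral>\<^sup>+ t. ennreal (b powr (2*lam)) * indicator A t \<partial>lborel)"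
  proof (intro nn_integral_mono)
    fix t show "ennreal (t powr (2*lam)) * indicator A t \<le> ennreal (b powr (2*lam)) * indicator A t"
    proof (cases "t \<in> A")
      case True
      hence "0 \<le> t" "t \<le> b" using assms(2) by auto
      hence "t powr (2*lam) \<le> b powr (2*lam)" using assms(3) by (intro powr_mono2) auto
      thus ?thesis using True by (simp add: ennreal_leI)
    qed simp
  qed
  also have "\<dots> = ennreal (b powr (2*lam)) * emeasure lborel A"
    using assms(1) by (subst nn_integral_cmult_indicator) auto
  finally show ?thesis .
qed

lemma mu_lower:
  assumes "A \<in> sets borel" "A \<subseteq> {u..}" "0 \<le> u" "0 \<le> lam"
  shows "ennreal (u powr (2*lam)) * emeasure lborel A \<le> emeasure (muM lam) A"
proof -
  have "ennreal (u powr (2*lam)) * emeasure lborel A = (\<integral>\<^sup>+ t. ennreal (u powr (2*lam)) * indicator A t \<partial>lborel)"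
    using assms(1) by (subst nn_integral_cmult_indicator) auto
  also have "\<dots> \<le> (\<integral>\<^sup>+ t. ennreal (t powr (2*lam)) * indicator A t \<partial>lborel)"
  proof (intro nn_integral_mono)
    fix t show "ennreal (u powr (2*lam)) * indicator A t \<le> ennreal (t powr (2*lam)) * indicator A t"
    proof (cases "t \<in> A")
      case True
      hence "u \<le> t" using assms(2) by auto
      hence "u powr (2*lam) \<le> t powr (2*lam)" using assms(3,4) by (intro powr_mono2) auto
      thus ?thesis using True by (simp add: ennreal_leI)
    qed simp
  qed
  also have "\<dots> = emeasure (muM lam) A"
    using emeasure_muM[OF assms(1)] by simp
  finally show ?thesis .
qed

lemma mu_Ioo_upper:
  assumes "0 \<le> a" "a < b" "0 \<le> lam"
  shows "mu_meas lam a b \<le> ennreal ((b-a) * b powr (2*lam))"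
proof -
  have "mu_meas lam a b \<le> ennreal (b powr (2*lam)) * emeasure lborel {a<..<b}"
    unfolding mu_meas_eq using assms by (intro mu_upper) auto
  also have "\<dots> = ennreal ((b-a) * b powr (2*lam))"
    using assms by (simp add: ennreal_mult' mult.commute)
  finally show ?thesis .
qed

lemma mu_Ioo_lower:
  assumes "0 \<le> u" "u < v" "0 \<le> lam"
  shows "ennreal ((v-u) * u powr (2*lam)) \<le> mu_meas lam u v"
proof -
  have "ennreal ((v-u) * u powr (2*lam)) = ennreal (u powr (2*lam)) * emeasure lborel {u<..<v}"
    using assms by (simp add: ennreal_mult' mult.commute)
  also have "\<dots> \<le> mu_meas lam u v"
    unfolding mu_meas_eq using assms by (intro mu_lower) auto
  finally show ?thesis .
qed

lemma mu_Ioo_mono: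
  assumes "a \<le> u" "v \<le> b"
  shows "mu_meas lam u v \<le> mu_meas lam a b"
  unfolding mu_meas_eq using assms by (intro emeasure_mono) auto

lemma mu_Ioo_finite:
  assumes "0 \<le> a" "a < b" "0 \<le> lam"
  shows "mu_meas lam a b < \<infinity>"
  using mu_Ioo_upper[OF assms] by (simp add: le_less_trans)

lemma mu_Ioo_pos:
  assumes "0 \<le> a" "a < b" "0 \<le> lam"
  shows "0 < mu_meas lam a b"
proof -
  define u where "u = (a+b)/2"
  have u: "0 < u" "a < u" "u < b" using assms unfolding u_def by auto
  have "0 < (b-u) * u powr (2*lam)" using u by simp
  hence "0 < ennreal ((b-u) * u powr (2*lam))" by simp
  also have "\<dots> \<le> mu_meas lam u b" using u assms(3) by (intro mu_Ioo_lower) auto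
  also have "\<dots> \<le> mu_meas lam a b" using u by (intro mu_Ioo_mono) auto
  finally show ?thesis .
qed

lemma mu_Ioo_real_pos:
  assumes "0 \<le> a" "a < b" "0 \<le> lam"
  shows "0 < enn2real (mu_meas lam a b)"
  using mu_Ioo_finite[OF assms] mu_Ioo_pos[OF assms]
  by (simp add: enn2real_positive_iff)

definition Dc :: "real \<Rightarrow> real" where "Dc lam = 4 * 4 powr (2*lam)"

lemma Dc_ge1: "0 \<le> lam \<Longrightarrow> 1 \<le> Dc lam"
proof -
  assume "0 \<le> lam"
  hence "1 \<le> 4 powr (2*lam)" by (intro ge_one_powr_ge_zero) auto
  thus "1 \<le> Dc lam" unfolding Dc_def by simp
qed

lemma mu_doubling:
  assumes "0 \<le> a" "a \<le> u" "u < v" "v \<le> b" "b - a \<le> 2 * (v - u)" "0 \<le> lam"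
  shows "mu_meas lam a b \<le> ennreal (Dc lam) * mu_meas lam u v"
proof -
  define m where "m = (u+v)/2"
  have m: "u < m" "m < v" "b/4 \<le> m" using assms unfolding m_def by auto
  have b0: "0 \<le> b" using assms by auto
  have A: "mu_meas lam a b \<le> ennreal ((b-a) * b powr (2*lam))"
    using assms by (intro mu_Ioo_upper) auto
  have e: "(b-a) * b powr (2*lam) = Dc lam * (((b-a)/4) * (b/4) powr (2*lam))"
    unfolding Dc_def using b0 by (simp add: powr_divide field_simps)
  have B0: "((b-a)/4) * (b/4) powr (2*lam) \<le> (v - m) * m powr (2*lam)"
  proof (intro mult_mono)
    show "(b-a)/4 \<le> v - m" using assms unfolding m_def by (simp add: field_simps)
    show "(b/4) powr (2*lam) \<le> m powr (2*lam)" using m b0 assms by (intro powr_mono2) auto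
  qed (use m in auto)
  have D0: "0 \<le> Dc lam" using Dc_ge1[OF assms(6)] by simp
  have B: "(b-a) * b powr (2*lam) \<le> Dc lam * ((v - m) * m powr (2*lam))"
    unfolding e using B0 D0 by (rule mult_left_mono)
  have E: "ennreal (Dc lam * ((v - m) * m powr (2*lam))) = ennreal (Dc lam) * ennreal ((v - m) * m powr (2*lam))"
    using m D0 by (intro ennreal_mult) auto
  have C: "ennreal ((v - m) * m powr (2*lam)) \<le> mu_meas lam u v"
  proof -
    have "ennreal ((v - m) * m powr (2*lam)) \<le> mu_meas lam m v"
      using m assms by (intro mu_Ioo_lower) auto
    also have "mu_meas lam m v \<le> mu_meas lam u v" using m by (intro mu_Ioo_mono) auto
    finally show ?thesis .
  qed
  have "mu_meas lam a b \<le> ennreal (Dc lam * ((v - m) * m powr (2*lam)))"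
    using A B by (meson ennreal_leI order_trans)
  also have "\<dots> \<le> ennreal (Dc lam) * mu_meas lam u v"
    unfolding E using C by (rule mult_left_mono) simp
  finally show ?thesis .
qed

lemma null_mu: "A \<in> null_sets lborel \<Longrightarrow> A \<in> null_sets (muM lam)"
  unfolding muM_def
  by (subst null_sets_density_iff) (auto dest: AE_not_in elim!: AE_mp)

lemma mu_null_imp:
  assumes "A \<in> sets borel" "A \<subseteq> {0<..}" "emeasure (muM lam) A = 0"
  shows "A \<in> null_sets lborel"
proof -
  have "A \<in> null_sets (muM lam)" using assms by (auto intro: null_setsI)
  hence "AE x in lborel. x \<in> A \<longrightarrow> ennreal (x powr (2*lam)) = 0"
    unfolding muM_def by (subst (asm) null_sets_density_iff) auto
  hence "AE x in lborel. x \<notin> A"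
  proof (rule AE_mp, intro AE_I2 impI)
    fix x assume h: "x \<in> A \<longrightarrow> ennreal (x powr (2*lam)) = 0"
    show "x \<notin> A"
    proof
      assume "x \<in> A"
      hence "0 < x" using assms(2) by auto
      hence "0 < x powr (2*lam)" by simp
      with h \<open>x \<in> A\<close> show False by simp
    qed
  qed
  thus ?thesis using assms(1) by (subst AE_iff_null_sets) auto
qed

lemma mu_fin_sub:
  assumes "A \<subseteq> {a<..<b}" "0 \<le> a" "a < b" "0 \<le> lam"
  shows "emeasure (muM lam) A < \<infinity>"
proof -
  have "emeasure (muM lam) A \<le> emeasure (muM lam) {a<..<b}"
    using assms(1) by (intro emeasure_mono) auto
  also have "\<dots> < \<infinity>" using mu_Ioo_finite[OF assms(2-4)] by (simp add: mu_meas_eq)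
  finally show ?thesis .
qed

definition dL :: "real \<Rightarrow> real \<Rightarrow> nat \<Rightarrow> nat \<Rightarrow> real" where
  "dL a b k j = a + real j * (b-a) / 2^k"

lemma dy_dL: "dy a b k j = {dL a b k j <..< dL a b k (Suc j)}"
  unfolding dy_def dL_def by (simp add: add.commute)

lemma dL_ge: "a \<le> b \<Longrightarrow> a \<le> dL a b k j"
  unfolding dL_def by simp

lemma dL_diff: "dL a b k (Suc j) - dL a b k j = (b-a)/2^k"
  unfolding dL_def by (simp add: field_simps)

lemma dL_lt: "a < b \<Longrightarrow> dL a b k j < dL a b k (Suc j)"
  using dL_diff[of a b k j] by (smt (verit) divide_pos_pos zero_less_power)

lemma mu_dy: "emeasure (muM lam) (dy a b k j) = mu_meas lam (dL a b k j) (dL a b k (Suc j))"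
  by (simp add: dy_dL mu_meas_eq)

lemma dy_pos_fin:
  assumes "0 \<le> a" "a < b" "0 \<le> lam"
  shows "0 < emeasure (muM lam) (dy a b k j)" "emeasure (muM lam) (dy a b k j) < \<infinity>"
proof -
  have h: "0 \<le> dL a b k j" "dL a b k j < dL a b k (Suc j)"
    using dL_ge[of a b k j] dL_lt[OF assms(2), of k j] assms by auto
  show "0 < emeasure (muM lam) (dy a b k j)" unfolding mu_dy by (rule mu_Ioo_pos[OF h assms(3)])
  show "emeasure (muM lam) (dy a b k j) < \<infinity>" unfolding mu_dy by (rule mu_Ioo_finite[OF h assms(3)])
qed

lemma dy_doubling:
  assumes "0 \<le> a" "a < b" "0 \<le> lam"
  shows "emeasure (muM lam) (dy a b k (j div 2)) \<le> ennreal (Dc lam) * emeasure (muM lam) (dy a b (Suc k) j)"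
proof -
  have sub: "dy a b (Suc k) j \<subseteq> dy a b k (j div 2)"
    using dy_anc[OF assms(2), of k "Suc k" j] by simp
  have lt: "dL a b (Suc k) j < dL a b (Suc k) (Suc j)" using dL_lt[OF assms(2)] .
  have ends: "dL a b k (j div 2) \<le> dL a b (Suc k) j" "dL a b (Suc k) (Suc j) \<le> dL a b k (Suc (j div 2))"
    using sub lt unfolding dy_dL greaterThanLessThan_subseteq_greaterThanLessThan by auto
  show ?thesis unfolding mu_dy
  proof (rule mu_doubling)
    show "0 \<le> dL a b k (j div 2)" using dL_ge[of a b k "j div 2"] assms by simp
    show "dL a b k (Suc (j div 2)) - dL a b k (j div 2) \<le> 2 * (dL a b (Suc k) (Suc j) - dL a b (Suc k) j)"
      unfolding dL_diff by (simp add: field_simps)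
  qed (use ends lt assms in auto)
qed

lemma density_dyadic:
  assumes ab: "0 \<le> a" "a < b" and lam: "0 \<le> lam"
    and E: "E \<in> sets borel" "E \<subseteq> {a<..<b}" "0 < emeasure (muM lam) E" and eps: "0 < \<epsilon>"
  shows "\<exists>k j. j < 2^k \<and> emeasure (muM lam) (dy a b k j - E) < ennreal \<epsilon> * emeasure (muM lam) (dy a b k j)"
proof (rule ccontr)
  assume contra: "\<not> ?thesis"
  let ?\<mu> = "muM lam"
  have Efin: "emeasure ?\<mu> E < \<infinity>" using mu_fin_sub[OF E(2) ab lam] .
  define mE where "mE = enn2real (emeasure ?\<mu> E)"
  have mE: "emeasure ?\<mu> E = ennreal mE" "0 < mE" using Efin E(3) unfolding mE_def
    by (auto simp: enn2real_positive_iff less_top[symmetric])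
  define K where "K = b powr (2*lam)"
  have K0: "0 \<le> K" unfolding K_def by simp
  define \<delta> where "\<delta> = \<epsilon> * mE / (K + 1)"
  have \<delta>0: "0 < \<delta>" unfolding \<delta>_def using eps mE K0 by auto
  obtain U where U: "open U" "E \<subseteq> U" "emeasure lborel (U - E) < \<delta>"
    using outer_regular_lborel[OF E(1) \<delta>0] by blast
  define V where "V = U \<inter> {a<..<b}"
  have V: "open V" "E \<subseteq> V" "V \<subseteq> {a<..<b}" unfolding V_def using U E by auto
  define P where "P = (\<lambda>k j. dy a b k j \<subseteq> V)"
  define Y where "Y = (\<Union>i\<in>maxi P. dy a b (fst i) (snd i))"
  have maxi_lt: "snd i < 2^fst i" if "i \<in> maxi P" for i using that unfolding maxi_def by auto
  have YV: "Y \<subseteq> V" unfolding Y_def maxi_def P_def by auto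
  have cover: "E - grid a b \<subseteq> Y"
  proof
    fix x assume x: "x \<in> E - grid a b"
    hence xV: "x \<in> V" using V by auto
    obtain r where r: "0 < r" "ball x r \<subseteq> V" using V(1) xV open_contains_ball by blast
    obtain k where k: "(b-a)/r < 2^k" using real_arch_pow[of 2 "(b-a)/r"] by auto
    have kr: "(b-a)/2^k < r" using k r(1) by (simp add: field_simps)
    have xab: "x \<in> {a<..<b}" using x E by auto
    have xin: "x \<in> dy a b k (idx a b k x)" and ilt: "idx a b k x < 2^k"
      using idx_mem[OF ab(2) xab] x by auto
    have "dy a b k (idx a b k x) \<subseteq> ball x r"
    proof
      fix y assume "y \<in> dy a b k (idx a b k x)"
      hence "dist y x < (b-a)/2^k" using dy_small[OF ab(2) xin] by auto
      thus "y \<in> ball x r" using kr by (simp add: dist_commute)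
    qed
    hence "P k (idx a b k x)" unfolding P_def using r(2) by (rule subset_trans)
    from maxi_cover[where P=P, OF ab(2) ilt this] obtain k' j' where "(k',j') \<in> maxi P" "dy a b k (idx a b k x) \<subseteq> dy a b k' j'"
      by blast
    hence "x \<in> dy a b (fst (k',j')) (snd (k',j'))" using xin by (simp add: subset_iff)
    thus "x \<in> Y" unfolding Y_def using \<open>(k',j') \<in> maxi P\<close> by (rule UN_I[rotated])
  qed
  have Ysets: "Y \<in> sets borel" unfolding Y_def
    by (intro sets.countable_UN'' countable_maxi) (auto simp: dy_def)
  have disj: "disjoint_family_on (\<lambda>i. dy a b (fst i) (snd i)) (maxi P)"
  proof (unfold disjoint_family_on_def, intro ballI impI)
    fix i i' assume "i \<in> maxi P" "i' \<in> maxi P" "i \<noteq> i'"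
    thus "dy a b (fst i) (snd i) \<inter> dy a b (fst i') (snd i') = {}"
      using maxi_disj[OF ab(2)] by (cases i; cases i') auto
  qed
  have disj2: "disjoint_family_on (\<lambda>i. dy a b (fst i) (snd i) - E) (maxi P)"
    using disj unfolding disjoint_family_on_def by blast
  have gs: "grid a b \<in> sets borel" using null_setsD2[OF grid_null] by simp
  have EY: "emeasure ?\<mu> E \<le> emeasure ?\<mu> Y"
  proof -
    have "emeasure ?\<mu> E \<le> emeasure ?\<mu> (Y \<union> grid a b)"
      using cover Ysets gs by (intro emeasure_mono) auto
    also have "\<dots> = emeasure ?\<mu> Y"
      using null_mu[OF grid_null] Ysets by (intro emeasure_Un_null_set) auto
    finally show ?thesis .
  qed
  have "emeasure ?\<mu> (Y - E) \<le> emeasure ?\<mu> (V - E)"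
    using YV Ysets V E by (intro emeasure_mono) (auto simp: open_Diff)
  also have "\<dots> \<le> ennreal K * emeasure lborel (V - E)"
    unfolding K_def using V E ab by (intro mu_upper lam) force+
  also have "\<dots> \<le> ennreal K * ennreal \<delta>"
  proof -
    have "emeasure lborel (V - E) \<le> emeasure lborel (U - E)"
      unfolding V_def using U E by (intro emeasure_mono) auto
    thus ?thesis using U(3) by (intro mult_left_mono) auto
  qed
  also have "\<dots> = ennreal (K * \<delta>)" using K0 \<delta>0 by (simp add: ennreal_mult)
  also have "\<dots> < ennreal (\<epsilon> * mE)"
  proof -
    have "K * \<delta> = (\<epsilon> * mE) * (K / (K+1))" unfolding \<delta>_def using K0 by (simp add: field_simps)
    also have "\<dots> < (\<epsilon> * mE) * 1" using K0 eps mE by (intro mult_strict_left_mono) auto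
    finally show ?thesis using eps mE by (simp add: ennreal_lessI)
  qed
  also have "\<dots> = ennreal \<epsilon> * emeasure ?\<mu> E" using mE eps by (simp add: ennreal_mult)
  also have "\<dots> \<le> ennreal \<epsilon> * emeasure ?\<mu> Y" using EY by (rule mult_left_mono) simp
  also have "emeasure ?\<mu> Y = (\<integral>\<^sup>+i. emeasure ?\<mu> (dy a b (fst i) (snd i)) \<partial>count_space (maxi P))"
    unfolding Y_def using disj by (intro emeasure_UN_countable countable_maxi) (auto simp: dy_def)
  also have "ennreal \<epsilon> * \<dots> = (\<integral>\<^sup>+i. ennreal \<epsilon> * emeasure ?\<mu> (dy a b (fst i) (snd i)) \<partial>count_space (maxi P))"
    by (simp add: nn_integral_cmult)
  also have "\<dots> \<le> (\<integral>\<^sup>+i. emeasure ?\<mu> (dy a b (fst i) (snd i) - E) \<partial>count_space (maxi P))"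
  proof (intro nn_integral_mono)
    fix i assume "i \<in> space (count_space (maxi P))"
    hence "snd i < 2^fst i" using maxi_lt by auto
    thus "ennreal \<epsilon> * emeasure ?\<mu> (dy a b (fst i) (snd i)) \<le> emeasure ?\<mu> (dy a b (fst i) (snd i) - E)"
      using contra by (metis not_le)
  qed
  also have "\<dots> = emeasure ?\<mu> (\<Union>i\<in>maxi P. dy a b (fst i) (snd i) - E)"
    using disj2 E by (intro emeasure_UN_countable[symmetric] countable_maxi) (auto simp: dy_def)
  also have "(\<Union>i\<in>maxi P. dy a b (fst i) (snd i) - E) = Y - E" unfolding Y_def by blast
  finally show False by simp
qed

lemma emeasure_density_set:
  assumes "f \<in> borel_measurable borel" "A \<in> sets borel"
  shows "emeasure (density (muM lam) f) A = (\<integral>\<^sup>+x\<in>A. f x \<partial>muM lam)"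
  using assms by (subst emeasure_density) auto

lemma dy_sets[measurable]: "dy a b k j \<in> sets borel"
  unfolding dy_def by simp

lemma cz:
  assumes ab: "0 \<le> a" "a < b" and lam: "0 \<le> lam"
    and g: "g \<in> borel_measurable borel" "\<And>x. 0 \<le> g x"
    and N: "0 < N"
    and int: "(\<integral>\<^sup>+x\<in>{a<..<b}. ennreal (g x) \<partial>muM lam) \<le> ennreal N * emeasure (muM lam) {a<..<b}"
  obtains Mx where "Mx \<subseteq> {(k,j). j < 2^k}" "countable Mx"
    "disjoint_family_on (\<lambda>i. dy a b (fst i) (snd i)) Mx"
    "2 * emeasure (muM lam) (\<Union>i\<in>Mx. dy a b (fst i) (snd i)) \<le> emeasure (muM lam) {a<..<b}"
    "\<And>i. i \<in> Mx \<Longrightarrow> (\<integral>\<^sup>+x\<in>dy a b (fst i) (snd i). ennreal (g x) \<partial>muM lam)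
        \<le> ennreal (2*N*Dc lam) * emeasure (muM lam) (dy a b (fst i) (snd i))"
    "{x\<in>{a<..<b}. 3*N < g x} - (\<Union>i\<in>Mx. dy a b (fst i) (snd i)) \<in> null_sets lborel"
proof -
  let ?\<mu> = "muM lam"
  define GM where "GM = density ?\<mu> (\<lambda>x. ennreal (g x))"
  have gm[measurable]: "(\<lambda>x. ennreal (g x)) \<in> borel_measurable borel" using g(1) by simp
  have GMe: "emeasure GM A = (\<integral>\<^sup>+x\<in>A. ennreal (g x) \<partial>?\<mu>)" if "A \<in> sets borel" for A
    unfolding GM_def using emeasure_density_set[OF gm that] .
  have sets_GM[simp]: "sets GM = sets borel" unfolding GM_def by simp
  define P where "P = (\<lambda>k j. ennreal (2*N) * emeasure ?\<mu> (dy a b k j) < emeasure GM (dy a b k j))"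
  define Mx where "Mx = maxi P"
  define Y where "Y = (\<Union>i\<in>Mx. dy a b (fst i) (snd i))"
  have Mx_lt: "Mx \<subseteq> {(k,j). j < 2^k}" unfolding Mx_def maxi_def by auto
  have cMx: "countable Mx" unfolding Mx_def by (rule countable_maxi)
  have disj: "disjoint_family_on (\<lambda>i. dy a b (fst i) (snd i)) Mx"
  proof (unfold disjoint_family_on_def, intro ballI impI)
    fix i i' assume "i \<in> Mx" "i' \<in> Mx" "i \<noteq> i'"
    thus "dy a b (fst i) (snd i) \<inter> dy a b (fst i') (snd i') = {}"
      unfolding Mx_def using maxi_disj[OF ab(2)] by (cases i; cases i') auto
  qed
  have Ysets: "Y \<in> sets borel" unfolding Y_def
    by (intro sets.countable_UN'' cMx) simp
  have Ysub: "Y \<subseteq> {a<..<b}" unfolding Y_def using Mx_lt dy_sub[OF ab(2)] by force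
  have mab: "0 < emeasure ?\<mu> {a<..<b}" "emeasure ?\<mu> {a<..<b} < \<infinity>"
    using mu_Ioo_pos[OF ab lam] mu_Ioo_finite[OF ab lam] by (auto simp: mu_meas_eq)
  have notP0: "\<not> P 0 0"
  proof
    assume "P 0 0"
    hence "ennreal (2*N) * emeasure ?\<mu> {a<..<b} < emeasure GM {a<..<b}" unfolding P_def dy_0 .
    also have "\<dots> \<le> ennreal N * emeasure ?\<mu> {a<..<b}" using int GMe by simp
    also have "\<dots> \<le> ennreal (2*N) * emeasure ?\<mu> {a<..<b}"
      using N by (intro mult_right_mono ennreal_leI) auto
    finally show False by simp
  qed
  have eqY: "emeasure ?\<mu> Y = (\<integral>\<^sup>+i. emeasure ?\<mu> (dy a b (fst i) (snd i)) \<partial>count_space Mx)"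
    unfolding Y_def using disj cMx by (intro emeasure_UN_countable) auto
  have "ennreal N * (2 * emeasure ?\<mu> Y) = ennreal (2*N) * emeasure ?\<mu> Y"
    using N by (simp add: ennreal_mult' mult_ac)
  also have "\<dots> = (\<integral>\<^sup>+i. ennreal (2*N) * emeasure ?\<mu> (dy a b (fst i) (snd i)) \<partial>count_space Mx)"
    unfolding eqY by (simp add: nn_integral_cmult)
  also have "\<dots> \<le> (\<integral>\<^sup>+i. emeasure GM (dy a b (fst i) (snd i)) \<partial>count_space Mx)"
  proof (intro nn_integral_mono)
    fix i assume "i \<in> space (count_space Mx)"
    hence "P (fst i) (snd i)" unfolding Mx_def maxi_def by auto
    thus "ennreal (2*N) * emeasure ?\<mu> (dy a b (fst i) (snd i)) \<le> emeasure GM (dy a b (fst i) (snd i))"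
      unfolding P_def by simp
  qed
  also have "\<dots> = emeasure GM Y"
    unfolding Y_def using disj cMx by (intro emeasure_UN_countable[symmetric]) auto
  also have "\<dots> \<le> emeasure GM {a<..<b}" using Ysub by (intro emeasure_mono) auto
  also have "\<dots> \<le> ennreal N * emeasure ?\<mu> {a<..<b}" using int GMe by simp
  finally have sum: "2 * emeasure ?\<mu> Y \<le> emeasure ?\<mu> {a<..<b}"
    using N by (subst (asm) ennreal_mult_le_mult_iff) auto
  have par: "emeasure GM (dy a b (fst i) (snd i)) \<le> ennreal (2*N*Dc lam) * emeasure ?\<mu> (dy a b (fst i) (snd i))"
    if i: "i \<in> Mx" for i
  proof -
    obtain k j where kj: "i = (k,j)" by (cases i)
    have jl: "j < 2^k" and Pkj: "P k j" and anc: "\<And>k'. k' < k \<Longrightarrow> \<not> P k' (j div 2^(k-k'))"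
      using i unfolding kj Mx_def maxi_def by auto
    have "k \<noteq> 0"
    proof
      assume "k = 0" hence "j = 0" using jl by simp
      thus False using Pkj notP0 \<open>k = 0\<close> by simp
    qed
    then obtain k0 where k0: "k = Suc k0" using not0_implies_Suc by blast
    have np: "\<not> P k0 (j div 2)" using anc[of k0] k0 by simp
    have "emeasure GM (dy a b k j) \<le> emeasure GM (dy a b k0 (j div 2))"
      using dy_anc[OF ab(2), of k0 k j] k0 by (intro emeasure_mono) auto
    also have "\<dots> \<le> ennreal (2*N) * emeasure ?\<mu> (dy a b k0 (j div 2))"
      using np unfolding P_def by simp
    also have "\<dots> \<le> ennreal (2*N) * (ennreal (Dc lam) * emeasure ?\<mu> (dy a b k j))"
      unfolding k0 using dy_doubling[OF ab lam, of k0 j] by (rule mult_left_mono) simp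
    also have "\<dots> = ennreal (2*N*Dc lam) * emeasure ?\<mu> (dy a b k j)"
      using N Dc_ge1[OF lam] by (simp add: ennreal_mult mult.assoc)
    finally show ?thesis unfolding kj by simp
  qed
  define E where "E = {x\<in>{a<..<b}. 3*N < g x} - Y"
  have Esets: "E \<in> sets borel" unfolding E_def using Ysets g(1) by measurable
  have Esub: "E \<subseteq> {a<..<b}" unfolding E_def by auto
  have Enull: "E \<in> null_sets lborel"
  proof (rule ccontr)
    assume nn: "E \<notin> null_sets lborel"
    have "emeasure ?\<mu> E \<noteq> 0"
    proof
      assume "emeasure ?\<mu> E = 0"
      hence "E \<in> null_sets lborel" using Esets Esub ab by (intro mu_null_imp) auto
      with nn show False by simp
    qed
    hence "0 < emeasure ?\<mu> E" by (simp add: zero_less_iff_neq_zero)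
    from density_dyadic[OF ab lam Esets Esub this, of "1/3"]
    obtain k j where jl: "j < 2^k"
      and small: "emeasure ?\<mu> (dy a b k j - E) < ennreal (1/3) * emeasure ?\<mu> (dy a b k j)"
      by auto
    define D0 where "D0 = dy a b k j"
    have D0fin: "emeasure ?\<mu> D0 < \<infinity>" unfolding D0_def using dy_pos_fin[OF ab lam] by simp
    have nP: "\<not> P k j"
    proof
      assume "P k j"
      from maxi_cover[where P=P, OF ab(2) jl this] obtain k' j' where
        "(k',j') \<in> maxi P" "dy a b k j \<subseteq> dy a b k' j'" by blast
      hence "D0 \<subseteq> Y" unfolding D0_def Y_def Mx_def by force
      hence "D0 - E = D0" unfolding E_def by auto
      hence "emeasure ?\<mu> D0 < ennreal (1/3) * emeasure ?\<mu> D0" using small unfolding D0_def by simp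
      also have "\<dots> \<le> 1 * emeasure ?\<mu> D0" by (intro mult_right_mono) auto
      finally show False by simp
    qed
    hence up: "emeasure GM D0 \<le> ennreal (2*N) * emeasure ?\<mu> D0" unfolding P_def D0_def by simp
    have "ennreal (3*N) * emeasure ?\<mu> (D0 \<inter> E) = (\<integral>\<^sup>+x\<in>D0 \<inter> E. ennreal (3*N) \<partial>?\<mu>)"
      using Esets unfolding D0_def by (subst nn_integral_cmult_indicator) auto
    also have "\<dots> \<le> (\<integral>\<^sup>+x\<in>D0 \<inter> E. ennreal (g x) \<partial>?\<mu>)"
    proof (intro nn_integral_mono)
      fix x show "ennreal (3*N) * indicator (D0 \<inter> E) x \<le> ennreal (g x) * indicator (D0 \<inter> E) x"
        unfolding E_def by (cases "x \<in> D0 \<inter> E") (auto simp: E_def intro!: ennreal_leI)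
    qed
    also have "\<dots> = emeasure GM (D0 \<inter> E)" using Esets unfolding D0_def by (subst GMe) auto
    also have "\<dots> \<le> emeasure GM D0" unfolding D0_def using Esets by (intro emeasure_mono) auto
    also note up
    finally have ineq1: "ennreal (3*N) * emeasure ?\<mu> (D0 \<inter> E) \<le> ennreal (2*N) * emeasure ?\<mu> D0" .
    have split: "emeasure ?\<mu> D0 = emeasure ?\<mu> (D0 \<inter> E) + emeasure ?\<mu> (D0 - E)"
      using Esets unfolding D0_def by (subst plus_emeasure) (auto intro!: arg_cong[where f="emeasure ?\<mu>"])
    have f1: "emeasure ?\<mu> (D0 \<inter> E) < \<infinity>" "emeasure ?\<mu> (D0 - E) < \<infinity>"
      using D0fin split by (auto simp: top_unique)
    obtain x where x: "emeasure ?\<mu> (D0 \<inter> E) = ennreal x" "0 \<le> x"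
      using f1(1) by (cases "emeasure ?\<mu> (D0 \<inter> E)") auto
    obtain y where y: "emeasure ?\<mu> (D0 - E) = ennreal y" "0 \<le> y"
      using f1(2) by (cases "emeasure ?\<mu> (D0 - E)") auto
    have A: "ennreal (3*N) * emeasure ?\<mu> (D0 \<inter> E) = ennreal (3*N*x)"
      unfolding x(1) using N x(2) by (simp add: ennreal_mult'[symmetric])
    have B: "ennreal (2*N) * emeasure ?\<mu> D0 = ennreal (2*N*(x+y))"
      unfolding split x(1) y(1) using N x(2) y(2)
      by (simp add: ennreal_mult'[symmetric] ennreal_plus[symmetric] del: ennreal_plus)
    have e1: "ennreal (3*N*x) \<le> ennreal (2*N*(x+y))"
      using ineq1 unfolding A B .
    hence r1: "3*N*x \<le> 2*N*(x+y)" using N x y by (subst (asm) ennreal_le_iff) auto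
    have C: "ennreal (1/3) * emeasure ?\<mu> D0 = ennreal ((x+y)/3)"
      unfolding split x(1) y(1) using x(2) y(2)
      by (simp add: ennreal_mult'[symmetric] ennreal_plus[symmetric] del: ennreal_plus)
    have "ennreal y < ennreal ((x+y)/3)"
      using small unfolding D0_def[symmetric] C y(1) .
    hence r2: "y < (x+y)/3" using y by (subst (asm) ennreal_less_iff) auto
    from r1 N have "3*x \<le> 2*(x+y)" by (simp add: algebra_simps)
    moreover have "3*y < x + y" using r2 by (simp add: field_simps)
    ultimately show False by argo
  qed
  show ?thesis
  proof (rule that[OF Mx_lt cMx disj])
    show "2 * emeasure ?\<mu> (\<Union>i\<in>Mx. dy a b (fst i) (snd i)) \<le> emeasure ?\<mu> {a<..<b}"
      using sum unfolding Y_def .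
    show "(\<integral>\<^sup>+x\<in>dy a b (fst i) (snd i). ennreal (g x) \<partial>?\<mu>)
        \<le> ennreal (2*N*Dc lam) * emeasure ?\<mu> (dy a b (fst i) (snd i))" if "i \<in> Mx" for i
      using par[OF that] GMe[of "dy a b (fst i) (snd i)"] by simp
    show "{x\<in>{a<..<b}. 3*N < g x} - (\<Union>i\<in>Mx. dy a b (fst i) (snd i)) \<in> null_sets lborel"
      using Enull unfolding E_def Y_def .
  qed
qed

lemma set_nn_muM:
  assumes "g \<in> borel_measurable borel" "\<And>x. 0 \<le> g x" "A \<in> sets borel"
  shows "(\<integral>\<^sup>+x\<in>A. ennreal (g x) \<partial>muM lam) = (\<integral>\<^sup>+t\<in>A. ennreal (g t * t powr (2*lam)) \<partial>lborel)"
proof -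
  have "(\<integral>\<^sup>+x\<in>A. ennreal (g x) \<partial>muM lam) = (\<integral>\<^sup>+t. ennreal (t powr (2*lam)) * (ennreal (g t) * indicator A t) \<partial>lborel)"
    using assms by (subst nn_integral_muM) auto
  also have "\<dots> = (\<integral>\<^sup>+t\<in>A. ennreal (g t * t powr (2*lam)) \<partial>lborel)"
    using assms(2) by (intro nn_integral_cong) (simp add: ennreal_mult' mult_ac)
  finally show ?thesis .
qed

lemma rho_set_integrable:
  assumes "0 \<le> u" "u < v" "0 \<le> lam"
  shows "set_integrable lborel {u<..<v} (\<lambda>t. t powr (2*lam))"
    "(LINT t:{u<..<v}|lborel. t powr (2*lam)) = enn2real (mu_meas lam u v)"
proof -
  have nn: "(\<integral>\<^sup>+t. ennreal (indicator {u<..<v} t *\<^sub>R t powr (2*lam)) \<partial>lborel) = mu_meas lam u v"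
    unfolding mu_meas_def by (intro nn_integral_cong) (auto simp: indicator_def)
  show si: "set_integrable lborel {u<..<v} (\<lambda>t. t powr (2*lam))"
    unfolding set_integrable_def
    by (rule integrableI_nonneg) (use nn mu_Ioo_finite[OF assms] in auto)
  have "ennreal (LINT t:{u<..<v}|lborel. t powr (2*lam)) = mu_meas lam u v"
    unfolding set_lebesgue_integral_def nn[symmetric] using si unfolding set_integrable_def
    by (subst nn_integral_eq_integral) auto
  moreover have "0 \<le> (LINT t:{u<..<v}|lborel. t powr (2*lam))"
    unfolding set_lebesgue_integral_def by (intro integral_nonneg_AE AE_I2) (auto simp: indicator_def)
  ultimately show "(LINT t:{u<..<v}|lborel. t powr (2*lam)) = enn2real (mu_meas lam u v)"
    by (metis enn2real_ennreal)
qed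

lemma avg_dev:
  assumes uv: "0 \<le> u" "u < v" and lam: "0 \<le> lam"
    and fi: "set_integrable lborel {u<..<v} (\<lambda>t. f t * t powr (2*lam))"
    and bd: "(\<integral>\<^sup>+t\<in>{u<..<v}. ennreal (\<bar>f t - c\<bar> * t powr (2*lam)) \<partial>lborel) \<le> ennreal K * mu_meas lam u v"
    and K: "0 \<le> K"
  shows "\<bar>mu_avg lam f u v - c\<bar> \<le> K"
proof -
  define A where "A = {u<..<v}"
  define m where "m = enn2real (mu_meas lam u v)"
  have m0: "0 < m" unfolding m_def using mu_Ioo_real_pos[OF uv lam] .
  have mm: "mu_meas lam u v = ennreal m" unfolding m_def
    using mu_Ioo_finite[OF uv lam] by (simp add: less_top)
  note ri = rho_set_integrable[OF uv lam]
  define F where "F = (LINT t:A|lborel. f t * t powr (2*lam))"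
  have avg: "mu_avg lam f u v = F / m" unfolding mu_avg_def F_def A_def m_def ..
  have si2: "set_integrable lborel A (\<lambda>t. c * t powr (2*lam))" using ri(1) unfolding A_def by simp
  have "F - c * m = (LINT t:A|lborel. f t * t powr (2*lam) - c * t powr (2*lam))"
    unfolding F_def using fi si2 ri(2) unfolding A_def m_def by (subst set_integral_diff(2)) auto
  also have "\<dots> = integral\<^sup>L lborel (\<lambda>t. indicator A t *\<^sub>R ((f t - c) * t powr (2*lam)))"
    unfolding set_lebesgue_integral_def by (simp add: algebra_simps)
  finally have eq: "F - c * m = integral\<^sup>L lborel (\<lambda>t. indicator A t *\<^sub>R ((f t - c) * t powr (2*lam)))" .
  have int3: "integrable lborel (\<lambda>t. indicator A t *\<^sub>R ((f t - c) * t powr (2*lam)))"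
  proof -
    have "set_integrable lborel A (\<lambda>t. f t * t powr (2*lam) - c * t powr (2*lam))"
      using fi si2 unfolding A_def by (rule set_integral_diff(1))
    thus ?thesis unfolding set_integrable_def by (simp add: algebra_simps)
  qed
  have "ennreal \<bar>F - c * m\<bar> \<le> (\<integral>\<^sup>+t. norm (indicator A t *\<^sub>R ((f t - c) * t powr (2*lam))) \<partial>lborel)"
    unfolding eq using integral_norm_bound_ennreal[OF int3] by simp
  also have "\<dots> = (\<integral>\<^sup>+t\<in>A. ennreal (\<bar>f t - c\<bar> * t powr (2*lam)) \<partial>lborel)"
    by (intro nn_integral_cong) (auto simp: indicator_def abs_mult)
  also have "\<dots> \<le> ennreal (K * m)" using bd unfolding A_def mm using K less_imp_le[OF m0] by (simp add: ennreal_mult)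
  finally have "\<bar>F - c * m\<bar> \<le> K * m" using K m0 by (subst (asm) ennreal_le_iff) auto
  hence "\<bar>F - c * m\<bar> / m \<le> K" using m0 by (simp add: divide_le_eq)
  moreover have "\<bar>F - c * m\<bar> / m = \<bar>F / m - c\<bar>" using m0 by (simp add: field_simps)
  ultimately show ?thesis unfolding avg by simp
qed

definition wM :: "(real \<Rightarrow> real) \<Rightarrow> real measure" where
  "wM w = density lborel (\<lambda>t. ennreal (w t))"

lemma sets_wM[simp, measurable_cong]: "sets (wM w) = sets borel"
  unfolding wM_def by simp

lemma space_wM[simp]: "space (wM w) = UNIV"
  unfolding wM_def by simp

lemma w_meas_eq: "w \<in> borel_measurable borel \<Longrightarrow> w_meas w a b = emeasure (wM w) {a<..<b}"
  unfolding w_meas_def wM_def by (subst emeasure_density) auto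

lemma null_w: "w \<in> borel_measurable borel \<Longrightarrow> A \<in> null_sets lborel \<Longrightarrow> A \<in> null_sets (wM w)"
  unfolding wM_def
  by (subst null_sets_density_iff) (auto dest: AE_not_in elim!: AE_mp)

locale jn =
  fixes lam :: real and f :: "real \<Rightarrow> real" and N :: real and w :: "real \<Rightarrow> real" and \<beta>0 :: real
  assumes lam: "0 \<le> lam"
    and fm[measurable]: "f \<in> borel_measurable borel"
    and wm[measurable]: "w \<in> borel_measurable borel"
    and locint: "\<And>\<alpha> \<beta>. 0 \<le> \<alpha> \<Longrightarrow> \<alpha> < \<beta> \<Longrightarrow> set_integrable lborel {\<alpha><..<\<beta>} (\<lambda>t. f t * t powr (2*lam))"
    and bmo: "\<And>\<alpha> \<beta>. 0 \<le> \<alpha> \<Longrightarrow> \<alpha> < \<beta> \<Longrightarrow>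
       (\<integral>\<^sup>+t\<in>{\<alpha><..<\<beta>}. ennreal (\<bar>f t - mu_avg lam f \<alpha> \<beta>\<bar> * t powr (2*lam)) \<partial>lborel) \<le> ennreal N * mu_meas lam \<alpha> \<beta>"
    and N: "0 < N"
    and beta: "0 \<le> \<beta>0" "\<beta>0 < 1"
    and Pw: "\<And>\<alpha> \<beta> E. 0 \<le> \<alpha> \<Longrightarrow> \<alpha> < \<beta> \<Longrightarrow> E \<in> sets borel \<Longrightarrow> E \<subseteq> {\<alpha><..<\<beta>} \<Longrightarrow>
       2 * emeasure (muM lam) E \<le> emeasure (muM lam) {\<alpha><..<\<beta>} \<Longrightarrow>
       emeasure (wM w) E \<le> ennreal \<beta>0 * emeasure (wM w) {\<alpha><..<\<beta>}"
begin

definition cc :: real where "cc = N * (3 + 2 * Dc lam)"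

lemma cc_ge: "3 * N \<le> cc" "0 < cc"
proof -
  have p: "0 < N * Dc lam" using N Dc_ge1[OF lam] by simp
  have e: "cc = 3*N + 2*(N*Dc lam)" unfolding cc_def by (simp add: algebra_simps)
  show "3 * N \<le> cc" "0 < cc" using p N unfolding e by linarith+
qed

lemma JN:
  assumes "0 \<le> \<alpha>" "\<alpha> < \<beta>"
  shows "emeasure (wM w) {x\<in>{\<alpha><..<\<beta>}. cc * real k < \<bar>f x - mu_avg lam f \<alpha> \<beta>\<bar>}
          \<le> ennreal (\<beta>0^k) * emeasure (wM w) {\<alpha><..<\<beta>}"
  using assms
proof (induction k arbitrary: \<alpha> \<beta>)
  case 0
  show ?case by (simp, intro emeasure_mono) auto
next
  case (Suc k)
  note ab = Suc.prems
  define av where "av = mu_avg lam f \<alpha> \<beta>"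
  define g where "g = (\<lambda>x. \<bar>f x - av\<bar>)"
  have gm[measurable]: "g \<in> borel_measurable borel" unfolding g_def by measurable
  have g0: "\<And>x. 0 \<le> g x" unfolding g_def by simp
  have int: "(\<integral>\<^sup>+x\<in>{\<alpha><..<\<beta>}. ennreal (g x) \<partial>muM lam) \<le> ennreal N * emeasure (muM lam) {\<alpha><..<\<beta>}"
    using bmo[OF ab] set_nn_muM[OF gm g0, of "{\<alpha><..<\<beta>}" lam] unfolding g_def av_def mu_meas_eq by simp
  obtain Mx where Mx: "Mx \<subseteq> {(k,j). j < 2^k}" "countable Mx"
    "disjoint_family_on (\<lambda>i. dy \<alpha> \<beta> (fst i) (snd i)) Mx"
    "2 * emeasure (muM lam) (\<Union>i\<in>Mx. dy \<alpha> \<beta> (fst i) (snd i)) \<le> emeasure (muM lam) {\<alpha><..<\<beta>}"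
    "\<And>i. i \<in> Mx \<Longrightarrow> (\<integral>\<^sup>+x\<in>dy \<alpha> \<beta> (fst i) (snd i). ennreal (g x) \<partial>muM lam)
        \<le> ennreal (2*N*Dc lam) * emeasure (muM lam) (dy \<alpha> \<beta> (fst i) (snd i))"
    "{x\<in>{\<alpha><..<\<beta>}. 3*N < g x} - (\<Union>i\<in>Mx. dy \<alpha> \<beta> (fst i) (snd i)) \<in> null_sets lborel"
    using cz[OF ab lam gm g0 N int] by blast
  define J where "J = (\<lambda>i. dy \<alpha> \<beta> (fst i) (snd i))"
  define uL where "uL = (\<lambda>i. dL \<alpha> \<beta> (fst i) (snd i))"
  define uR where "uR = (\<lambda>i. dL \<alpha> \<beta> (fst i) (Suc (snd i)))"
  have J_eq: "J i = {uL i<..<uR i}" for i unfolding J_def uL_def uR_def by (rule dy_dL)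
  have uL0: "0 \<le> uL i" for i unfolding uL_def using dL_ge[of \<alpha> \<beta> "fst i" "snd i"] ab by auto
  have uLR: "uL i < uR i" for i unfolding uL_def uR_def using dL_lt[OF ab(2)] .
  have Jsub: "J i \<subseteq> {\<alpha><..<\<beta>}" if "i \<in> Mx" for i
  proof -
    have "snd i < 2^fst i" using Mx(1) that by auto
    thus ?thesis unfolding J_def by (rule dy_sub[OF ab(2)])
  qed
  define Y where "Y = (\<Union>i\<in>Mx. J i)"
  have Ysets: "Y \<in> sets borel" unfolding Y_def J_def by (intro sets.countable_UN'' Mx(2)) simp
  have Ysub: "Y \<subseteq> {\<alpha><..<\<beta>}" unfolding Y_def using Jsub by auto
  have close: "\<bar>mu_avg lam f (uL i) (uR i) - av\<bar> \<le> 2*N*Dc lam" if i: "i \<in> Mx" for i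
  proof (rule avg_dev[OF uL0 uLR lam locint[OF uL0 uLR]])
    show "0 \<le> 2*N*Dc lam" using N Dc_ge1[OF lam] by simp
    have "(\<integral>\<^sup>+t\<in>{uL i<..<uR i}. ennreal (\<bar>f t - av\<bar> * t powr (2*lam)) \<partial>lborel)
        = (\<integral>\<^sup>+x\<in>J i. ennreal (g x) \<partial>muM lam)"
      unfolding J_eq g_def using set_nn_muM[OF gm g0, of "J i"] unfolding J_eq g_def by simp
    also have "\<dots> \<le> ennreal (2*N*Dc lam) * emeasure (muM lam) (J i)"
      using Mx(5)[OF i] unfolding J_def .
    also have "emeasure (muM lam) (J i) = mu_meas lam (uL i) (uR i)"
      unfolding J_eq mu_meas_eq ..
    finally show "(\<integral>\<^sup>+t\<in>{uL i<..<uR i}. ennreal (\<bar>f t - av\<bar> * t powr (2*lam)) \<partial>lborel)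
        \<le> ennreal (2*N*Dc lam) * mu_meas lam (uL i) (uR i)" .
  qed
  define A where "A = (\<lambda>i. {x\<in>{uL i<..<uR i}. cc * real k < \<bar>f x - mu_avg lam f (uL i) (uR i)\<bar>})"
  have Asets: "A i \<in> sets borel" for i unfolding A_def by measurable
  define Nset where "Nset = {x\<in>{\<alpha><..<\<beta>}. 3*N < g x} - Y"
  have Nnull: "Nset \<in> null_sets (wM w)"
    using null_w[OF wm Mx(6)] unfolding Nset_def Y_def J_def .
  have incl: "{x\<in>{\<alpha><..<\<beta>}. cc * real (Suc k) < \<bar>f x - av\<bar>} \<subseteq> Nset \<union> (\<Union>i\<in>Mx. A i)"
  proof
    fix x assume x: "x \<in> {x\<in>{\<alpha><..<\<beta>}. cc * real (Suc k) < \<bar>f x - av\<bar>}"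
    have c1: "cc \<le> cc * real (Suc k)" using cc_ge by simp
    have c2: "cc * real (Suc k) < \<bar>f x - av\<bar>" using x by simp
    have big: "3*N < g x" unfolding g_def using c1 c2 cc_ge(1) by linarith
    show "x \<in> Nset \<union> (\<Union>i\<in>Mx. A i)"
    proof (cases "x \<in> Y")
      case False thus ?thesis using x big unfolding Nset_def by auto
    next
      case True
      then obtain i where i: "i \<in> Mx" "x \<in> J i" unfolding Y_def by auto
      have "cc * real k + 2*N*Dc lam < cc * real (Suc k)"
        using N unfolding cc_def by (simp add: algebra_simps)
      hence "cc * real k < \<bar>f x - mu_avg lam f (uL i) (uR i)\<bar>"
        using x close[OF i(1)] by auto
      thus ?thesis using i J_eq unfolding A_def by auto
    qed
  qed
  have disjA: "disjoint_family_on A Mx"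
  proof (unfold disjoint_family_on_def, intro ballI impI)
    fix i i' assume h: "i \<in> Mx" "i' \<in> Mx" "i \<noteq> i'"
    have "J i \<inter> J i' = {}" using Mx(3) h unfolding disjoint_family_on_def J_def by auto
    moreover have "A i \<subseteq> J i" "A i' \<subseteq> J i'" unfolding A_def J_eq by auto
    ultimately show "A i \<inter> A i' = {}" by blast
  qed
  have disjJ: "disjoint_family_on J Mx" using Mx(3) unfolding J_def .
  have "emeasure (wM w) {x\<in>{\<alpha><..<\<beta>}. cc * real (Suc k) < \<bar>f x - av\<bar>} \<le> emeasure (wM w) (Nset \<union> (\<Union>i\<in>Mx. A i))"
  proof (rule emeasure_mono[OF incl])
    have "{x\<in>{\<alpha><..<\<beta>}. 3*N < g x} \<in> sets borel" by measurable
    hence "Nset \<in> sets borel" unfolding Nset_def using Ysets by (rule sets.Diff)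
    moreover have "(\<Union>i\<in>Mx. A i) \<in> sets borel" using Asets by (intro sets.countable_UN'' Mx(2))
    ultimately show "Nset \<union> (\<Union>i\<in>Mx. A i) \<in> sets (wM w)" by simp
  qed
  also have "\<dots> = emeasure (wM w) (\<Union>i\<in>Mx. A i)"
  proof -
    have "(\<Union>i\<in>Mx. A i) \<in> sets borel" using Asets by (intro sets.countable_UN'' Mx(2))
    hence "(\<Union>i\<in>Mx. A i) \<in> sets (wM w)" by simp
    thus ?thesis using Nnull by (subst Un_commute, intro emeasure_Un_null_set)
  qed
  also have "\<dots> = (\<integral>\<^sup>+i. emeasure (wM w) (A i) \<partial>count_space Mx)"
    using disjA Asets Mx(2) by (intro emeasure_UN_countable) auto
  also have "\<dots> \<le> (\<integral>\<^sup>+i. ennreal (\<beta>0^k) * emeasure (wM w) (J i) \<partial>count_space Mx)"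
  proof (intro nn_integral_mono)
    fix i
    show "emeasure (wM w) (A i) \<le> ennreal (\<beta>0^k) * emeasure (wM w) (J i)"
      unfolding A_def J_eq by (rule Suc.IH[OF uL0 uLR])
  qed
  also have "\<dots> = ennreal (\<beta>0^k) * emeasure (wM w) Y"
    unfolding Y_def using disjJ Mx(2)
    by (subst emeasure_UN_countable) (auto simp: nn_integral_cmult J_def)
  also have "\<dots> \<le> ennreal (\<beta>0^k) * (ennreal \<beta>0 * emeasure (wM w) {\<alpha><..<\<beta>})"
  proof (intro mult_left_mono)
    show "emeasure (wM w) Y \<le> ennreal \<beta>0 * emeasure (wM w) {\<alpha><..<\<beta>}"
      using Pw[OF ab Ysets Ysub] Mx(4) unfolding Y_def J_def by simp
  qed simp
  also have "\<dots> = ennreal (\<beta>0^Suc k) * emeasure (wM w) {\<alpha><..<\<beta>}"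
    using beta by (simp add: ennreal_mult mult_ac)
  finally show ?case unfolding av_def g_def .
qed

end

lemma summ_poly_geom:
  assumes q: "0 \<le> q" "q < 1"
  shows "summable (\<lambda>k. (real k + 1) powr p * q^k)"
proof (cases "q = 0")
  case True
  have "summable (\<lambda>k. if k = 0 then (1::real) else 0)" by simp
  moreover have "(\<lambda>k. (real k + 1) powr p * q^k) = (\<lambda>k. if k = 0 then (1::real) else 0)"
    using True by (auto simp: fun_eq_iff)
  ultimately show ?thesis by simp
next
  case False
  hence q0: "0 < q" using q by simp
  define c where "c = (1 + q) / 2"
  have c1: "c < 1" unfolding c_def using q by simp
  have lim: "(\<lambda>k. ((real k + 2) / (real k + 1)) powr p) \<longlonglongrightarrow> 1" by real_asymp
  have "1 < c / q" unfolding c_def using q q0 by (simp add: field_simps)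
  hence "eventually (\<lambda>k. ((real k + 2) / (real k + 1)) powr p < c / q) sequentially"
    using lim by (rule order_tendstoD(2)[rotated])
  then obtain M where M: "\<And>k. k \<ge> M \<Longrightarrow> ((real k + 2) / (real k + 1)) powr p < c / q"
    by (auto simp: eventually_sequentially)
  show ?thesis
  proof (rule summable_ratio_test[OF c1])
    fix k assume k: "k \<ge> M"
    have pos: "0 < real k + 1" by simp
    have e: "(real (Suc k) + 1) powr p = ((real k + 2) / (real k + 1)) powr p * (real k + 1) powr p"
      using pos by (simp add: powr_divide add.commute)
    have "(real (Suc k) + 1) powr p * q^Suc k = (((real k + 2) / (real k + 1)) powr p * q) * ((real k + 1) powr p * q^k)"
      unfolding e by (simp add: mult_ac)
    also have "\<dots> \<le> c * ((real k + 1) powr p * q^k)"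
    proof (rule mult_right_mono)
      show "((real k + 2) / (real k + 1)) powr p * q \<le> c"
        using M[OF k] q0 by (simp add: field_simps)
    qed (use q in simp)
    finally show "norm ((real (Suc k) + 1) powr p * q^Suc k) \<le> c * norm ((real k + 1) powr p * q^k)"
      using q by simp
  qed
qed


lemma ennreal_le_suminf: "f i \<le> (\<Sum>k. f k :: ennreal)"
  using sum_le_suminf[of f "{i}"] by (simp add: summableI)

lemma pointwise_layer:
  assumes c: "0 < c" and G: "0 \<le> G" and p: "0 < p"
  shows "ennreal (G powr p) \<le> (\<Sum>k. ennreal (c powr p * (real k + 1) powr p) * indicator {y. c * real k < y} G)"
proof (cases "G = 0")
  case True thus ?thesis by simp
next
  case False
  hence G0: "0 < G" using G by simp
  define K where "K = \<lceil>G / c\<rceil>"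
  have K1: "1 \<le> K" unfolding K_def using G0 c by (simp add: one_le_ceiling)
  define k0 where "k0 = nat (K - 1)"
  have rk: "real k0 = real_of_int K - 1" unfolding k0_def using K1 by simp
  have lt: "c * real k0 < G"
  proof -
    have "real_of_int K - 1 < G / c" unfolding K_def by linarith
    thus ?thesis unfolding rk using c by (simp add: field_simps)
  qed
  have le: "G \<le> c * (real k0 + 1)"
  proof -
    have "G / c \<le> real_of_int K" unfolding K_def by (rule le_of_int_ceiling)
    thus ?thesis unfolding rk using c by (simp add: field_simps)
  qed
  have "G powr p \<le> (c * (real k0 + 1)) powr p" using le G p by (intro powr_mono2) auto
  also have "\<dots> = c powr p * (real k0 + 1) powr p" using c by (simp add: powr_mult)
  finally have "ennreal (G powr p) \<le> ennreal (c powr p * (real k0 + 1) powr p) * indicator {y. c * real k0 < y} G"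
    using lt by (simp add: ennreal_leI)
  also have "\<dots> \<le> (\<Sum>k. ennreal (c powr p * (real k + 1) powr p) * indicator {y. c * real k < y} G)"
    by (rule ennreal_le_suminf[where f="\<lambda>k. ennreal (c powr p * (real k + 1) powr p) * indicator {y. c * real k < y} G"])
  finally show ?thesis .
qed

definition Ssum :: "real \<Rightarrow> real \<Rightarrow> real" where
  "Ssum q p = (\<Sum>k. (real k + 1) powr p * q^k)"

context jn
begin

lemma Lp_bound:
  assumes ab: "0 \<le> \<alpha>" "\<alpha> < \<beta>" and p: "0 < p"
  shows "(\<integral>\<^sup>+x\<in>{\<alpha><..<\<beta>}. ennreal (\<bar>f x - mu_avg lam f \<alpha> \<beta>\<bar> powr p * w x) \<partial>lborel)
     \<le> ennreal (cc powr p * Ssum \<beta>0 p) * emeasure (wM w) {\<alpha><..<\<beta>}"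
proof -
  define av where "av = mu_avg lam f \<alpha> \<beta>"
  define G where "G = (\<lambda>x. \<bar>f x - av\<bar>)"
  have Gm[measurable]: "G \<in> borel_measurable borel" unfolding G_def by measurable
  define I where "I = {\<alpha><..<\<beta>}"
  define B where "B = (\<lambda>k. {x\<in>I. cc * real k < G x})"
  have Bm[measurable]: "B k \<in> sets borel" for k unfolding B_def I_def by measurable
  have summ: "summable (\<lambda>k. (real k + 1) powr p * \<beta>0^k)" using summ_poly_geom[OF beta] .
  have "(\<integral>\<^sup>+x\<in>I. ennreal (G x powr p * w x) \<partial>lborel) = (\<integral>\<^sup>+x. ennreal (G x powr p) * indicator I x \<partial>wM w)"
    unfolding wM_def by (subst nn_integral_density) (auto intro!: nn_integral_cong simp: ennreal_mult'' mult_ac I_def)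
  also have "\<dots> \<le> (\<integral>\<^sup>+x. (\<Sum>k. ennreal (cc powr p * (real k + 1) powr p) * indicator (B k) x) \<partial>wM w)"
  proof (intro nn_integral_mono)
    fix x
    show "ennreal (G x powr p) * indicator I x \<le> (\<Sum>k. ennreal (cc powr p * (real k + 1) powr p) * indicator (B k) x)"
    proof (cases "x \<in> I")
      case True
      have "ennreal (G x powr p) \<le> (\<Sum>k. ennreal (cc powr p * (real k + 1) powr p) * indicator {y. cc * real k < y} (G x))"
        using pointwise_layer[OF cc_ge(2) _ p, of "G x"] unfolding G_def by simp
      also have "\<dots> = (\<Sum>k. ennreal (cc powr p * (real k + 1) powr p) * indicator (B k) x)"
        using True unfolding B_def by (simp add: indicator_def)
      finally show ?thesis using True by simp
    qed simp
  qed
  also have "\<dots> = (\<Sum>k. ennreal (cc powr p * (real k + 1) powr p) * emeasure (wM w) (B k))"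
    by (subst nn_integral_suminf) (auto simp: nn_integral_cmult_indicator)
  also have "\<dots> \<le> (\<Sum>k. ennreal (cc powr p * ((real k + 1) powr p * \<beta>0^k)) * emeasure (wM w) I)"
  proof (intro suminf_le allI)
    fix k
    have "emeasure (wM w) (B k) \<le> ennreal (\<beta>0^k) * emeasure (wM w) I"
      using JN[OF ab, of k] unfolding B_def I_def G_def av_def .
    hence "ennreal (cc powr p * (real k + 1) powr p) * emeasure (wM w) (B k)
        \<le> ennreal (cc powr p * (real k + 1) powr p) * (ennreal (\<beta>0^k) * emeasure (wM w) I)"
      by (rule mult_left_mono) simp
    also have "\<dots> = ennreal (cc powr p * ((real k + 1) powr p * \<beta>0^k)) * emeasure (wM w) I"
      using beta by (simp add: ennreal_mult mult_ac)
    finally show "ennreal (cc powr p * (real k + 1) powr p) * emeasure (wM w) (B k)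
        \<le> ennreal (cc powr p * ((real k + 1) powr p * \<beta>0^k)) * emeasure (wM w) I" .
  qed (auto intro: summableI)
  also have "\<dots> = (\<Sum>k. ennreal (cc powr p * ((real k + 1) powr p * \<beta>0^k))) * emeasure (wM w) I"
    by simp
  also have "(\<Sum>k. ennreal (cc powr p * ((real k + 1) powr p * \<beta>0^k))) = ennreal (\<Sum>k. cc powr p * ((real k + 1) powr p * \<beta>0^k))"
    using summ beta by (intro suminf_ennreal2) (auto intro: summable_mult)
  also have "(\<Sum>k. cc powr p * ((real k + 1) powr p * \<beta>0^k)) = cc powr p * Ssum \<beta>0 p"
    unfolding Ssum_def using summ by (rule suminf_mult)
  finally show ?thesis unfolding I_def G_def av_def .
qed

end

lemma holder_zero:
  fixes F G :: "'a \<Rightarrow> real"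
  assumes "F \<in> borel_measurable M" "\<And>x. 0 \<le> F x" "0 < p"
    and "(\<integral>\<^sup>+x. ennreal (F x powr p) \<partial>M) = 0"
  shows "(\<integral>\<^sup>+x. ennreal (F x * G x) \<partial>M) = 0"
proof -
  have "AE x in M. ennreal (F x powr p) = 0"
    using assms by (subst nn_integral_0_iff_AE[symmetric]) auto
  hence "AE x in M. F x = 0" by (rule AE_mp) (auto intro!: AE_I2 simp: assms(2))
  hence "(\<integral>\<^sup>+x. ennreal (F x * G x) \<partial>M) = (\<integral>\<^sup>+x. 0 \<partial>M)"
    by (intro nn_integral_cong_AE) (auto elim!: AE_mp)
  thus ?thesis by simp
qed

lemma holder:
  fixes F G :: "'a \<Rightarrow> real"
  assumes pq: "1 < p" "1 < q" "1/p + 1/q = 1"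
    and m[measurable]: "F \<in> borel_measurable M" "G \<in> borel_measurable M"
    and nn: "\<And>x. 0 \<le> F x" "\<And>x. 0 \<le> G x"
    and fin: "(\<integral>\<^sup>+x. ennreal (F x powr p) \<partial>M) < \<infinity>" "(\<integral>\<^sup>+x. ennreal (G x powr q) \<partial>M) < \<infinity>"
  shows "(\<integral>\<^sup>+x. ennreal (F x * G x) \<partial>M)
    \<le> ennreal (enn2real (\<integral>\<^sup>+x. ennreal (F x powr p) \<partial>M) powr (1/p) * enn2real (\<integral>\<^sup>+x. ennreal (G x powr q) \<partial>M) powr (1/q))"
proof -
  define A where "A = enn2real (\<integral>\<^sup>+x. ennreal (F x powr p) \<partial>M)"
  define B where "B = enn2real (\<integral>\<^sup>+x. ennreal (G x powr q) \<partial>M)"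
  have IA: "(\<integral>\<^sup>+x. ennreal (F x powr p) \<partial>M) = ennreal A" unfolding A_def using fin(1) by (simp add: less_top)
  have IB: "(\<integral>\<^sup>+x. ennreal (G x powr q) \<partial>M) = ennreal B" unfolding B_def using fin(2) by (simp add: less_top)
  have A0: "0 \<le> A" "0 \<le> B" unfolding A_def B_def by auto
  show ?thesis
  proof (cases "A = 0 \<or> B = 0")
    case True
    hence "(\<integral>\<^sup>+x. ennreal (F x * G x) \<partial>M) = 0"
    proof
      assume "A = 0" thus ?thesis using holder_zero[OF m(1) nn(1), of p G] IA pq by simp
    next
      assume "B = 0"
      hence "(\<integral>\<^sup>+x. ennreal (G x * F x) \<partial>M) = 0" using holder_zero[OF m(2) nn(2), of q F] IB pq by simp
      thus ?thesis by (simp add: mult.commute)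
    qed
    thus ?thesis by simp
  next
    case False
    hence Ap: "0 < A" "0 < B" using A0 by auto
    define a where "a = A powr (1/p)"
    define b where "b = B powr (1/q)"
    have ab: "0 < a" "0 < b" unfolding a_def b_def using Ap by auto
    have ap: "a powr p = A" unfolding a_def using Ap pq by (simp add: powr_powr)
    have bq: "b powr q = B" unfolding b_def using Ap pq by (simp add: powr_powr)
    define c1 where "c1 = a*b/(p*A)"
    define c2 where "c2 = a*b/(q*B)"
    have pw: "F x * G x \<le> c1 * F x powr p + c2 * G x powr q" for x
    proof -
      have "(F x / a) * (G x / b) \<le> (F x / a) powr p / p + (G x / b) powr q / q"
        using nn ab by (intro Youngs_inequality pq) auto
      also have "(F x / a) powr p = F x powr p / A" using nn ab ap by (simp add: powr_divide)
      also have "(G x / b) powr q = G x powr q / B" using nn ab bq by (simp add: powr_divide)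
      finally have "(F x / a) * (G x / b) \<le> F x powr p / A / p + G x powr q / B / q" .
      hence "(a*b) * ((F x / a) * (G x / b)) \<le> (a*b) * (F x powr p / A / p + G x powr q / B / q)"
        using ab by (intro mult_left_mono) auto
      moreover have "(a*b) * ((F x / a) * (G x / b)) = F x * G x" using ab by (simp add: field_simps)
      moreover have "(a*b) * (F x powr p / A / p + G x powr q / B / q) = (a*b/(p*A)) * F x powr p + (a*b/(q*B)) * G x powr q"
      proof -
        have "p \<noteq> 0" "q \<noteq> 0" "A \<noteq> 0" "B \<noteq> 0" using pq Ap by auto
        thus ?thesis by (simp add: field_simps)
      qed
      ultimately show ?thesis unfolding c1_def c2_def by simp
    qed
    have c0: "0 \<le> c1" "0 \<le> c2" unfolding c1_def c2_def using ab Ap pq by auto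
    have "(\<integral>\<^sup>+x. ennreal (F x * G x) \<partial>M)
        \<le> (\<integral>\<^sup>+x. ennreal (c1) * ennreal (F x powr p) + ennreal (c2) * ennreal (G x powr q) \<partial>M)"
    proof (intro nn_integral_mono)
      fix x
      have "ennreal (F x * G x) \<le> ennreal (c1 * F x powr p + c2 * G x powr q)"
        using pw[of x] by (rule ennreal_leI)
      also have "\<dots> = ennreal c1 * ennreal (F x powr p) + ennreal c2 * ennreal (G x powr q)"
        using c0 by (simp add: ennreal_mult)
      finally show "ennreal (F x * G x) \<le> ennreal (c1) * ennreal (F x powr p) + ennreal (c2) * ennreal (G x powr q)" .
    qed
    also have "\<dots> = ennreal (c1) * ennreal A + ennreal (c2) * ennreal B"
      by (subst nn_integral_add) (auto simp: nn_integral_cmult IA IB)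
    also have "\<dots> = ennreal (c1 * A + c2 * B)"
      using c0 A0 by (simp add: ennreal_mult)
    also have "c1 * A + c2 * B = a*b * (1/p + 1/q)" unfolding c1_def c2_def using Ap pq by (simp add: field_simps)
    also have "\<dots> = a * b" using pq by simp
    finally show ?thesis unfolding a_def b_def A_def B_def .
  qed
qed

definition sigw :: "real \<Rightarrow> real \<Rightarrow> (real \<Rightarrow> real) \<Rightarrow> real set \<Rightarrow> ennreal" where
  "sigw lam r w A = (\<integral>\<^sup>+t\<in>A. ennreal (t powr (2*lam*(r/(r-1))) * w t powr (-1/(r-1))) \<partial>lborel)"

lemma holder_weight:
  assumes r: "1 < r" and wm[measurable]: "w \<in> borel_measurable borel"
    and wpos: "AE t in lborel. 0 < t \<longrightarrow> 0 < w t"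
    and hm[measurable]: "h \<in> borel_measurable borel" and h0: "\<And>x. 0 \<le> h x"
    and I[measurable]: "I \<in> sets borel" and Ipos: "I \<subseteq> {0<..}"
    and fin1: "(\<integral>\<^sup>+x\<in>I. ennreal (h x powr r * w x) \<partial>lborel) < \<infinity>"
    and fin2: "sigw lam r w I < \<infinity>"
  shows "(\<integral>\<^sup>+x\<in>I. ennreal (h x * x powr (2*lam)) \<partial>lborel)
     \<le> ennreal (enn2real (\<integral>\<^sup>+x\<in>I. ennreal (h x powr r * w x) \<partial>lborel) powr (1/r) * enn2real (sigw lam r w I) powr (1 - 1/r))"
proof -
  define q where "q = r/(r-1)"
  have q: "1 < q" "1/r + 1/q = 1" "1/q = 1 - 1/r" unfolding q_def using r by (auto simp: field_simps)
  define F where "F = (\<lambda>x. indicator I x * (h x * w x powr (1/r)))"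
  define G where "G = (\<lambda>x. indicator I x * (w x powr (-1/r) * x powr (2*lam)))"
  have Fm[measurable]: "F \<in> borel_measurable lborel" unfolding F_def by measurable
  have Gm[measurable]: "G \<in> borel_measurable lborel" unfolding G_def by measurable
  have F0: "\<And>x. 0 \<le> F x" unfolding F_def using h0 by simp
  have G0: "\<And>x. 0 \<le> G x" unfolding G_def by simp
  have wpos': "AE x in lborel. x \<in> I \<longrightarrow> 0 < w x" using wpos by (rule AE_mp) (use Ipos in auto)
  have eFG: "(\<integral>\<^sup>+x. ennreal (F x * G x) \<partial>lborel) = (\<integral>\<^sup>+x\<in>I. ennreal (h x * x powr (2*lam)) \<partial>lborel)"
  proof (intro nn_integral_cong_AE, rule AE_mp[OF wpos'], intro AE_I2 impI)
    fix x assume h: "x \<in> I \<longrightarrow> 0 < w x"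
    show "ennreal (F x * G x) = ennreal (h x * x powr (2*lam)) * indicator I x"
    proof (cases "x \<in> I")
      case True
      hence wx: "0 < w x" using h by simp
      have "w x powr (1/r) * w x powr (-1/r) = 1" using wx by (simp add: powr_add[symmetric])
      hence "F x * G x = h x * x powr (2*lam)" unfolding F_def G_def using True
        by (simp add: mult_ac)
      thus ?thesis using True by simp
    qed (simp add: F_def G_def)
  qed
  have eF: "(\<integral>\<^sup>+x. ennreal (F x powr r) \<partial>lborel) = (\<integral>\<^sup>+x\<in>I. ennreal (h x powr r * w x) \<partial>lborel)"
  proof (intro nn_integral_cong_AE, rule AE_mp[OF wpos'], intro AE_I2 impI)
    fix x assume h: "x \<in> I \<longrightarrow> 0 < w x"
    show "ennreal (F x powr r) = ennreal (h x powr r * w x) * indicator I x"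
    proof (cases "x \<in> I")
      case True
      hence wx: "0 < w x" using h by simp
      have "F x powr r = h x powr r * (w x powr (1/r)) powr r" unfolding F_def using True h0
        by (simp add: powr_mult)
      also have "(w x powr (1/r)) powr r = w x" using wx r by (simp add: powr_powr)
      finally show ?thesis using True by simp
    qed (use r in \<open>simp add: F_def\<close>)
  qed
  have eG: "(\<integral>\<^sup>+x. ennreal (G x powr q) \<partial>lborel) = sigw lam r w I"
    unfolding sigw_def
  proof (intro nn_integral_cong)
    fix x
    show "ennreal (G x powr q) = ennreal (x powr (2*lam*(r/(r-1))) * w x powr (-1/(r-1))) * indicator I x"
    proof (cases "x \<in> I")
      case True
      have x0: "0 < x" using True Ipos by auto
      have "G x powr q = (w x powr (-1/r)) powr q * (x powr (2*lam)) powr q" unfolding G_def using True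
        by (simp add: powr_mult)
      also have "(w x powr (-1/r)) powr q = w x powr (-1/(r-1))"
        unfolding q_def using r by (simp add: powr_powr field_simps)
      also have "(x powr (2*lam)) powr q = x powr (2*lam*(r/(r-1)))"
        unfolding q_def by (simp add: powr_powr)
      finally show ?thesis using True by (simp add: mult.commute)
    qed (use q in \<open>simp add: G_def\<close>)
  qed
  have "(\<integral>\<^sup>+x\<in>I. ennreal (h x * x powr (2*lam)) \<partial>lborel) = (\<integral>\<^sup>+x. ennreal (F x * G x) \<partial>lborel)"
    using eFG by simp
  also have "\<dots> \<le> ennreal (enn2real (\<integral>\<^sup>+x. ennreal (F x powr r) \<partial>lborel) powr (1/r) * enn2real (\<integral>\<^sup>+x. ennreal (G x powr q) \<partial>lborel) powr (1/q))"
    using fin1 fin2 unfolding eF[symmetric] eG[symmetric]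
    by (intro holder[OF r q(1) q(2) Fm Gm F0 G0]) auto
  finally show ?thesis unfolding eF eG q(3) .
qed

lemma is_weight_meas: "is_weight w \<Longrightarrow> w \<in> borel_measurable borel"
  unfolding is_weight_def by simp

lemma mu_real:
  assumes "0 \<le> a" "a < b" "0 \<le> lam"
  shows "mu_meas lam a b = ennreal (enn2real (mu_meas lam a b))" "0 < enn2real (mu_meas lam a b)"
  using mu_Ioo_finite[OF assms] mu_Ioo_real_pos[OF assms] by (auto simp: less_top)

lemma Ap_const:
  assumes lam: "0 \<le> lam" and r: "1 < r" and Ap: "Ap_tilde lam r w"
  obtains C where "0 \<le> C" "\<And>a b. 0 \<le> a \<Longrightarrow> a < b \<Longrightarrow> w_meas w a b < \<infinity> \<and> sigw lam r w {a<..<b} < \<infinity> \<and>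
     enn2real (w_meas w a b) * enn2real (sigw lam r w {a<..<b}) powr (r-1) \<le> C * enn2real (mu_meas lam a b) powr r"
proof -
  from Ap obtain C where C: "\<And>a b. 0 \<le> a \<Longrightarrow> a < b \<Longrightarrow> w_meas w a b < \<infinity> \<and> sigw lam r w {a<..<b} < \<infinity> \<and>
        (enn2real (w_meas w a b) / enn2real (mu_meas lam a b)) *
        (enn2real (sigw lam r w {a<..<b}) / enn2real (mu_meas lam a b)) powr (r - 1) \<le> C"
    unfolding Ap_tilde_def sigw_def by blast
  have C0: "0 \<le> C" using C[of 0 1] by (smt (verit) divide_nonneg_nonneg enn2real_nonneg powr_ge_zero zero_le_mult_iff)
  show ?thesis
  proof (rule that[OF C0])
    fix a b :: real assume ab: "0 \<le> a" "a < b"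
    define W where "W = enn2real (w_meas w a b)"
    define S where "S = enn2real (sigw lam r w {a<..<b})"
    define m where "m = enn2real (mu_meas lam a b)"
    have m0: "0 < m" unfolding m_def using mu_real[OF ab lam] by simp
    have W0: "0 \<le> W" "0 \<le> S" unfolding W_def S_def by auto
    have h: "(W / m) * (S / m) powr (r - 1) \<le> C" using C[OF ab] unfolding W_def S_def m_def by simp
    have e: "(W / m) * (S / m) powr (r - 1) = (W * S powr (r-1)) / m powr r"
    proof -
      have "m powr r = m powr (1 + (r - 1))" by simp
      also have "\<dots> = m powr 1 * m powr (r - 1)" by (rule powr_add)
      finally have "m powr r = m * m powr (r - 1)" using m0 by (simp add: powr_one)
      thus ?thesis by (simp add: powr_divide)
    qed
    have "W * S powr (r-1) \<le> C * m powr r" using h m0 unfolding e by (simp add: divide_le_eq)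
    thus "w_meas w a b < \<infinity> \<and> sigw lam r w {a<..<b} < \<infinity> \<and>
     enn2real (w_meas w a b) * enn2real (sigw lam r w {a<..<b}) powr (r-1) \<le> C * enn2real (mu_meas lam a b) powr r"
      using C[OF ab] unfolding W_def S_def m_def by simp
  qed
qed

lemma emeasure_muM_set: "F \<in> sets borel \<Longrightarrow> emeasure (muM lam) F = (\<integral>\<^sup>+x\<in>F. ennreal (1 * x powr (2*lam)) \<partial>lborel)"
  by (simp add: emeasure_muM)

lemma emeasure_wM_set: "w \<in> borel_measurable borel \<Longrightarrow> F \<in> sets borel \<Longrightarrow> emeasure (wM w) F = (\<integral>\<^sup>+x\<in>F. ennreal (1 powr r * w x) \<partial>lborel)"
  unfolding wM_def by (subst emeasure_density) (auto intro!: nn_integral_cong)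

definition KI :: "real \<Rightarrow> real \<Rightarrow> (real \<Rightarrow> real) \<Rightarrow> real \<Rightarrow> bool" where
  "KI lam r w C \<longleftrightarrow> (\<forall>a b F. 0 \<le> a \<longrightarrow> a < b \<longrightarrow> F \<in> sets borel \<longrightarrow> F \<subseteq> {a<..<b} \<longrightarrow>
      enn2real (emeasure (muM lam) F) powr r * enn2real (w_meas w a b)
        \<le> C * enn2real (emeasure (wM w) F) * enn2real (mu_meas lam a b) powr r)"

lemma Ap_KI:
  assumes lam: "0 \<le> lam" and r: "1 < r" and w: "is_weight w" and Ap: "Ap_tilde lam r w"
  obtains C where "0 \<le> C" "\<And>a b. 0 \<le> a \<Longrightarrow> a < b \<Longrightarrow> w_meas w a b < \<infinity>" "KI lam r w C"
proof -
  have wm[measurable]: "w \<in> borel_measurable borel" using w by (rule is_weight_meas)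
  have wpos: "AE t in lborel. 0 < t \<longrightarrow> 0 < w t" using w unfolding is_weight_def by simp
  obtain C where C0: "0 \<le> C" and C: "\<And>a b. 0 \<le> a \<Longrightarrow> a < b \<Longrightarrow> w_meas w a b < \<infinity> \<and> sigw lam r w {a<..<b} < \<infinity> \<and>
     enn2real (w_meas w a b) * enn2real (sigw lam r w {a<..<b}) powr (r-1) \<le> C * enn2real (mu_meas lam a b) powr r"
    using Ap_const[OF lam r Ap] by blast
  show ?thesis
  proof (rule that[OF C0])
    show "\<And>a b. 0 \<le> a \<Longrightarrow> a < b \<Longrightarrow> w_meas w a b < \<infinity>" using C by blast
    show "KI lam r w C" unfolding KI_def
    proof (intro allI impI)
      fix a b :: real and F :: "real set" assume ab: "0 \<le> a" "a < b" and F: "F \<in> sets borel" "F \<subseteq> {a<..<b}"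
      have Fpos: "F \<subseteq> {0<..}"
      proof
        fix x assume "x \<in> F" hence "a < x" using F(2) by auto
        thus "x \<in> {0<..}" unfolding greaterThan_iff by (rule le_less_trans[OF ab(1)])
      qed
      define WF where "WF = enn2real (emeasure (wM w) F)"
      define WI where "WI = enn2real (w_meas w a b)"
      define SF where "SF = enn2real (sigw lam r w F)"
      define SI where "SI = enn2real (sigw lam r w {a<..<b})"
      define mF where "mF = enn2real (emeasure (muM lam) F)"
      define mI where "mI = enn2real (mu_meas lam a b)"
      have Cab: "w_meas w a b < \<infinity>" "sigw lam r w {a<..<b} < \<infinity>" "WI * SI powr (r-1) \<le> C * mI powr r"
        using C[OF ab] unfolding WI_def SI_def mI_def by auto
      have WFle: "emeasure (wM w) F \<le> w_meas w a b"
        unfolding w_meas_eq[OF wm] using F by (intro emeasure_mono) auto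
      have SFle: "sigw lam r w F \<le> sigw lam r w {a<..<b}"
        unfolding sigw_def using F by (intro nn_set_integral_set_mono) auto
      have fin1: "(\<integral>\<^sup>+x\<in>F. ennreal (1 powr r * w x) \<partial>lborel) < \<infinity>"
        using WFle Cab(1) emeasure_wM_set[OF wm F(1), of r] by simp
      have fin2: "sigw lam r w F < \<infinity>" using SFle Cab(2) by (simp add: le_less_trans)
      have "emeasure (muM lam) F \<le> ennreal (WF powr (1/r) * SF powr (1 - 1/r))"
        using holder_weight[OF r wm wpos _ _ F(1) Fpos fin1 fin2] measurable_const[of "1::real" borel borel]
        unfolding WF_def SF_def emeasure_muM_set[OF F(1)] emeasure_wM_set[OF wm F(1), of r] by simp
      hence h1: "mF \<le> WF powr (1/r) * SF powr (1 - 1/r)" unfolding mF_def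
        by (simp add: enn2real_leI)
      have SFI: "SF \<le> SI" unfolding SF_def SI_def using SFle Cab(2) by (simp add: enn2real_mono)
      have WF0: "0 \<le> WF" "0 \<le> SF" unfolding WF_def SF_def by auto
      have "SF powr (1 - 1/r) \<le> SI powr (1 - 1/r)" using SFI WF0 r by (intro powr_mono2) auto
      hence "WF powr (1/r) * SF powr (1 - 1/r) \<le> WF powr (1/r) * SI powr (1 - 1/r)"
        by (rule mult_left_mono) simp
      hence "mF \<le> WF powr (1/r) * SI powr (1 - 1/r)" using h1 by linarith
      hence "mF powr r \<le> (WF powr (1/r) * SI powr (1 - 1/r)) powr r"
        using r unfolding mF_def by (intro powr_mono2) auto
      also have "\<dots> = WF powr ((1/r) * r) * SI powr ((1 - 1/r) * r)"
        by (simp add: powr_mult powr_powr)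
      also have "(1/r) * r = 1" using r by simp
      also have "(1 - 1/r) * r = r - 1" using r by (simp add: field_simps)
      also have "WF powr 1 = WF" using WF0(1) by (rule powr_one)
      finally have h2: "mF powr r \<le> WF * SI powr (r - 1)" .
      have "mF powr r * WI \<le> WF * SI powr (r - 1) * WI"
        using h2 unfolding WI_def by (intro mult_right_mono) auto
      also have "\<dots> = WF * (WI * SI powr (r - 1))" by simp
      also have "\<dots> \<le> WF * (C * mI powr r)" using Cab(3) unfolding WF_def by (intro mult_left_mono) auto
      finally show "enn2real (emeasure (muM lam) F) powr r * enn2real (w_meas w a b)
        \<le> C * enn2real (emeasure (wM w) F) * enn2real (mu_meas lam a b) powr r"
        unfolding mF_def WI_def WF_def mI_def by (simp add: mult_ac)
    qed
  qed
qed

lemma A1_pt: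
  assumes lam: "0 \<le> lam" and w: "is_weight w" and A1: "A1_tilde lam w"
  obtains C where "0 \<le> C" "\<And>a b. 0 \<le> a \<Longrightarrow> a < b \<Longrightarrow> w_meas w a b < \<infinity>"
    "\<And>a b. 0 \<le> a \<Longrightarrow> a < b \<Longrightarrow> AE x in lborel. x \<in> {a<..<b} \<longrightarrow>
        enn2real (w_meas w a b) / enn2real (mu_meas lam a b) * x powr (2*lam) \<le> C * w x"
proof -
  from A1 obtain C where C: "\<And>a b. 0 \<le> a \<Longrightarrow> a < b \<Longrightarrow> AE x in lborel. x \<in> {a<..<b} \<longrightarrow>
           w_meas w a b / mu_meas lam a b \<le> ennreal (C * w x / x powr (2*lam))"
    unfolding A1_tilde_def by blast
  define C0 where "C0 = max C 0"
  have wpos: "AE t in lborel. 0 < t \<longrightarrow> 0 < w t" using w unfolding is_weight_def by simp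
  have fin: "w_meas w a b < \<infinity>" if ab: "0 \<le> a" "a < b" for a b
  proof (rule ccontr)
    assume "\<not> w_meas w a b < \<infinity>"
    hence top: "w_meas w a b = \<infinity>" by (simp add: not_less top_unique)
    have "mu_meas lam a b \<noteq> \<infinity>" using mu_Ioo_finite[OF ab lam] by simp
    hence "w_meas w a b / mu_meas lam a b = \<infinity>" using top by (simp add: ennreal_top_divide)
    hence "AE x in lborel. x \<notin> {a<..<b}" using C[OF ab] by (rule_tac AE_mp) (auto intro!: AE_I2 simp: top_unique)
    hence "{a<..<b} \<in> null_sets lborel" by (subst AE_iff_null_sets) auto
    thus False using ab by auto
  qed
  show ?thesis
  proof (rule that)
    show "0 \<le> C0" unfolding C0_def by simp
    show "\<And>a b. 0 \<le> a \<Longrightarrow> a < b \<Longrightarrow> w_meas w a b < \<infinity>" using fin by blast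
    fix a b :: real assume ab: "0 \<le> a" "a < b"
    define W where "W = enn2real (w_meas w a b)"
    define m where "m = enn2real (mu_meas lam a b)"
    have m0: "0 < m" unfolding m_def using mu_real[OF ab lam] by simp
    have Wd: "w_meas w a b = ennreal W" unfolding W_def using fin[OF ab] by (simp add: less_top)
    have md: "mu_meas lam a b = ennreal m" unfolding m_def using mu_real[OF ab lam] by simp
    have W0: "0 \<le> W" unfolding W_def by simp
    have q: "w_meas w a b / mu_meas lam a b = ennreal (W/m)" unfolding Wd md using W0 m0 by (simp add: divide_ennreal)
    show "AE x in lborel. x \<in> {a<..<b} \<longrightarrow> enn2real (w_meas w a b) / enn2real (mu_meas lam a b) * x powr (2*lam) \<le> C0 * w x"
      using C[OF ab] wpos
    proof (eventually_elim)
      case (elim x)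
      show ?case
      proof
        assume x: "x \<in> {a<..<b}"
        have x0: "0 < x" using x ab by auto
        have wx: "0 < w x" using elim(2) x0 by simp
        have rx: "0 < x powr (2*lam)" using x0 by simp
        have "ennreal (W/m) \<le> ennreal (C * w x / x powr (2*lam))" using elim(1) x unfolding q by simp
        also have "\<dots> \<le> ennreal (C0 * w x / x powr (2*lam))"
          using wx rx unfolding C0_def by (intro ennreal_leI divide_right_mono mult_right_mono) auto
        finally have "W/m \<le> C0 * w x / x powr (2*lam)"
          using wx rx unfolding C0_def by (subst (asm) ennreal_le_iff) auto
        hence "W/m * x powr (2*lam) \<le> C0 * w x" using rx by (simp add: le_divide_eq)
        thus "enn2real (w_meas w a b) / enn2real (mu_meas lam a b) * x powr (2*lam) \<le> C0 * w x"
          unfolding W_def m_def .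
      qed
    qed
  qed
qed

lemma A1_KI:
  assumes lam: "0 \<le> lam" and w: "is_weight w" and A1: "A1_tilde lam w"
  obtains C where "0 \<le> C" "\<And>a b. 0 \<le> a \<Longrightarrow> a < b \<Longrightarrow> w_meas w a b < \<infinity>" "KI lam 1 w C"
proof -
  have wm[measurable]: "w \<in> borel_measurable borel" using w by (rule is_weight_meas)
  obtain C where C0: "0 \<le> C" and fin: "\<And>a b. 0 \<le> a \<Longrightarrow> a < b \<Longrightarrow> w_meas w a b < \<infinity>"
    and pt: "\<And>a b. 0 \<le> a \<Longrightarrow> a < b \<Longrightarrow> AE x in lborel. x \<in> {a<..<b} \<longrightarrow>
        enn2real (w_meas w a b) / enn2real (mu_meas lam a b) * x powr (2*lam) \<le> C * w x"
    using A1_pt[OF lam w A1] by blast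
  show ?thesis
  proof (rule that[OF C0 fin])
    show "KI lam 1 w C" unfolding KI_def
    proof (intro allI impI)
      fix a b :: real and F :: "real set" assume ab: "0 \<le> a" "a < b" and F: "F \<in> sets borel" "F \<subseteq> {a<..<b}"
      define W where "W = enn2real (w_meas w a b)"
      define m where "m = enn2real (mu_meas lam a b)"
      have m0: "0 < m" unfolding m_def using mu_real[OF ab lam] by simp
      have W0: "0 \<le> W" unfolding W_def by simp
      have WFfin: "emeasure (wM w) F < \<infinity>"
      proof -
        have "emeasure (wM w) F \<le> w_meas w a b" unfolding w_meas_eq[OF wm] using F by (intro emeasure_mono) auto
        thus ?thesis using fin[OF ab] by (simp add: le_less_trans)
      qed
      have mFfin: "emeasure (muM lam) F < \<infinity>" using mu_fin_sub[OF F(2) ab lam] .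
      have Wm0: "0 \<le> W/m" using W0 m0 by simp
      have Fm[measurable]: "F \<in> sets borel" using F(1) .
      have "ennreal (W/m) * emeasure (muM lam) F = ennreal (W/m) * (\<integral>\<^sup>+x\<in>F. ennreal (x powr (2*lam)) \<partial>lborel)"
        using F by (simp add: emeasure_muM)
      also have "\<dots> = (\<integral>\<^sup>+x. ennreal (W/m) * (ennreal (x powr (2*lam)) * indicator F x) \<partial>lborel)"
        using F by (intro nn_integral_cmult[symmetric]) measurable
      also have "\<dots> = (\<integral>\<^sup>+x\<in>F. ennreal (W/m * x powr (2*lam)) \<partial>lborel)"
        by (intro nn_integral_cong) (simp only: ennreal_mult[OF Wm0 powr_ge_zero] mult_ac)
      also have "\<dots> \<le> (\<integral>\<^sup>+x\<in>F. ennreal (C * w x) \<partial>lborel)"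
      proof (intro nn_integral_mono_AE)
        show "AE x in lborel. ennreal (W/m * x powr (2*lam)) * indicator F x \<le> ennreal (C * w x) * indicator F x"
          using pt[OF ab]
        proof eventually_elim
          case (elim x)
          show ?case
          proof (cases "x \<in> F")
            case True thus ?thesis using elim F unfolding W_def m_def by (auto intro!: ennreal_leI)
          qed simp
        qed
      qed
      also have "\<dots> = ennreal C * emeasure (wM w) F"
        unfolding wM_def using F C0 by (subst emeasure_density) (auto simp: nn_integral_cmult[symmetric] ennreal_mult' mult_ac intro!: nn_integral_cong)
      finally have ineq: "ennreal (W/m) * emeasure (muM lam) F \<le> ennreal C * emeasure (wM w) F" .
      define mF where "mF = enn2real (emeasure (muM lam) F)"
      define WF where "WF = enn2real (emeasure (wM w) F)"
      have mF0: "0 \<le> mF" and WF0: "0 \<le> WF" unfolding mF_def WF_def by auto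
      have e1: "emeasure (muM lam) F = ennreal mF" unfolding mF_def using mFfin by (simp add: less_top)
      have e2: "emeasure (wM w) F = ennreal WF" unfolding WF_def using WFfin by (simp add: less_top)
      have "ennreal (W/m * mF) \<le> ennreal (C * WF)"
        using ineq unfolding e1 e2 ennreal_mult[OF Wm0 mF0] ennreal_mult[OF C0 WF0] .
      hence "W/m * mF \<le> C * WF" using C0 unfolding WF_def by (subst (asm) ennreal_le_iff) auto
      hence "mF * W \<le> C * WF * m" using m0 by (simp add: field_simps)
      moreover have "mF \<ge> 0" "m \<ge> 0" unfolding mF_def using m0 by auto
      ultimately show "enn2real (emeasure (muM lam) F) powr 1 * enn2real (w_meas w a b)
        \<le> C * enn2real (emeasure (wM w) F) * enn2real (mu_meas lam a b) powr 1"
        unfolding mF_def WF_def W_def m_def by (simp add: powr_one)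
    qed
  qed
qed

lemma fin_emeasure_real:
  assumes "emeasure M A < \<infinity>"
  shows "emeasure M A = ennreal (measure M A)"
  using assms by (simp add: emeasure_eq_ennreal_measure less_top)

lemma KI_Pw:
  assumes lam: "0 \<le> lam" and r: "1 \<le> r" and C0: "0 \<le> C" and KI: "KI lam r w C"
    and wm[measurable]: "w \<in> borel_measurable borel"
    and fin: "\<And>a b. 0 \<le> a \<Longrightarrow> a < b \<Longrightarrow> w_meas w a b < \<infinity>"
  obtains \<beta>0 where "0 \<le> \<beta>0" "\<beta>0 < 1"
    "\<And>\<alpha> \<beta> E. 0 \<le> \<alpha> \<Longrightarrow> \<alpha> < \<beta> \<Longrightarrow> E \<in> sets borel \<Longrightarrow> E \<subseteq> {\<alpha><..<\<beta>} \<Longrightarrow>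
       2 * emeasure (muM lam) E \<le> emeasure (muM lam) {\<alpha><..<\<beta>} \<Longrightarrow>
       emeasure (wM w) E \<le> ennreal \<beta>0 * emeasure (wM w) {\<alpha><..<\<beta>}"
proof -
  define \<gamma> where "\<gamma> = (1/2) powr r / (C+1)"
  have g0: "0 < \<gamma>" unfolding \<gamma>_def using C0 by simp
  define \<beta>0 where "\<beta>0 = 1 - min \<gamma> (1/2)"
  show ?thesis
  proof (rule that)
    show "0 \<le> \<beta>0" "\<beta>0 < 1" unfolding \<beta>0_def using g0 by auto
    fix \<alpha> \<beta> :: real and E :: "real set"
    assume ab: "0 \<le> \<alpha>" "\<alpha> < \<beta>" and E: "E \<in> sets borel" "E \<subseteq> {\<alpha><..<\<beta>}"
      and half: "2 * emeasure (muM lam) E \<le> emeasure (muM lam) {\<alpha><..<\<beta>}"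
    define I where "I = {\<alpha><..<\<beta>}"
    define F where "F = I - E"
    have Fs: "F \<in> sets borel" unfolding F_def I_def using E by auto
    have FI: "F \<subseteq> {\<alpha><..<\<beta>}" unfolding F_def I_def by auto
    have IEF: "I = E \<union> F" "E \<inter> F = {}" unfolding F_def using E unfolding I_def by auto
    let ?\<mu> = "muM lam" and ?W = "wM w"
    have muIfin: "emeasure ?\<mu> I < \<infinity>" unfolding I_def using mu_Ioo_finite[OF ab lam] by (simp add: mu_meas_eq)
    have WIfin: "emeasure ?W I < \<infinity>" unfolding I_def using fin[OF ab] by (simp add: w_meas_eq)
    have muE: "emeasure ?\<mu> E < \<infinity>" using mu_fin_sub[OF E(2) ab lam] .
    have muF: "emeasure ?\<mu> F < \<infinity>" using mu_fin_sub[OF FI ab lam] .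
    have WE: "emeasure ?W E < \<infinity>"
      using emeasure_mono[of E I ?W] E WIfin unfolding I_def by (simp add: le_less_trans)
    have WF: "emeasure ?W F < \<infinity>"
      using emeasure_mono[of F I ?W] FI WIfin Fs unfolding I_def by (simp add: le_less_trans)
    define mI where "mI = measure ?\<mu> I"
    define mE where "mE = measure ?\<mu> E"
    define mF where "mF = measure ?\<mu> F"
    define WI' where "WI' = measure ?W I"
    define WE' where "WE' = measure ?W E"
    define WF' where "WF' = measure ?W F"
    have mIp: "0 < mI" unfolding mI_def I_def using mu_real[OF ab lam] by (simp add: measure_def mu_meas_eq)
    have eqs: "emeasure ?\<mu> I = ennreal mI" "emeasure ?\<mu> E = ennreal mE" "emeasure ?\<mu> F = ennreal mF"
      "emeasure ?W I = ennreal WI'" "emeasure ?W E = ennreal WE'" "emeasure ?W F = ennreal WF'"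
      unfolding mI_def mE_def mF_def WI'_def WE'_def WF'_def
      using muIfin muE muF WIfin WE WF by (auto intro: fin_emeasure_real)
    have nn: "0 \<le> mE" "0 \<le> mF" "0 \<le> WE'" "0 \<le> WF'" "0 \<le> WI'"
      unfolding mE_def mF_def WE'_def WF'_def WI'_def by auto
    have "emeasure ?\<mu> I = emeasure ?\<mu> E + emeasure ?\<mu> F"
      unfolding IEF(1) using E Fs IEF(2) by (intro plus_emeasure[symmetric]) auto
    hence "ennreal mI = ennreal (mE + mF)" unfolding eqs using nn by simp
    hence madd: "mI = mE + mF" using nn mIp by (subst (asm) ennreal_inj) auto
    have "emeasure ?W I = emeasure ?W E + emeasure ?W F"
      unfolding IEF(1) using E Fs IEF(2) by (intro plus_emeasure[symmetric]) auto
    hence "ennreal WI' = ennreal (WE' + WF')" unfolding eqs using nn by simp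
    hence wadd: "WI' = WE' + WF'" using nn by (subst (asm) ennreal_inj) auto
    have "ennreal (2 * mE) \<le> ennreal mI" using half unfolding I_def[symmetric] eqs using nn
      by (simp add: ennreal_mult)
    hence "2 * mE \<le> mI" using mIp by (subst (asm) ennreal_le_iff) auto
    hence mFge: "mI / 2 \<le> mF" using madd by simp
    have KIF: "mF powr r * WI' \<le> C * WF' * mI powr r"
      using KI[unfolded KI_def, rule_format, OF ab Fs FI]
      unfolding mF_def WI'_def WF'_def mI_def I_def measure_def w_meas_eq[OF wm] mu_meas_eq by simp
    have "(mI / 2) powr r \<le> mF powr r" using mFge mIp r by (intro powr_mono2) auto
    hence "(1/2) powr r * mI powr r * WI' \<le> mF powr r * WI'"
      using nn by (intro mult_right_mono) (auto simp: powr_divide)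
    also note KIF
    also have "C * WF' * mI powr r \<le> (C + 1) * WF' * mI powr r" using nn by (intro mult_right_mono) auto
    finally have "((1/2) powr r * WI') * mI powr r \<le> ((C + 1) * WF') * mI powr r" by (simp add: mult_ac)
    hence "(1/2) powr r * WI' \<le> (C + 1) * WF'" using mIp by (subst (asm) mult_le_cancel_right_pos) auto
    hence gam: "\<gamma> * WI' \<le> WF'" unfolding \<gamma>_def using C0 by (simp add: field_simps)
    have "min \<gamma> (1/2) * WI' \<le> \<gamma> * WI'" using nn by (intro mult_right_mono) auto
    hence "WE' \<le> \<beta>0 * WI'" unfolding \<beta>0_def using gam wadd by (simp add: algebra_simps)
    hence "ennreal WE' \<le> ennreal (\<beta>0 * WI')" by (rule ennreal_leI)
    also have "\<dots> = ennreal \<beta>0 * ennreal WI'" using nn g0 unfolding \<beta>0_def by (intro ennreal_mult) auto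
    finally show "emeasure ?W E \<le> ennreal \<beta>0 * emeasure ?W {\<alpha><..<\<beta>}"
      unfolding I_def[symmetric] eqs .
  qed
qed

lemma Ainf_weight:
  assumes lam: "0 \<le> lam" and w: "is_weight w" and A: "Ainf_tilde lam w"
  obtains \<beta>0 where "0 \<le> \<beta>0" "\<beta>0 < 1" "\<And>a b. 0 \<le> a \<Longrightarrow> a < b \<Longrightarrow> w_meas w a b < \<infinity>"
    "\<And>\<alpha> \<beta> E. 0 \<le> \<alpha> \<Longrightarrow> \<alpha> < \<beta> \<Longrightarrow> E \<in> sets borel \<Longrightarrow> E \<subseteq> {\<alpha><..<\<beta>} \<Longrightarrow>
       2 * emeasure (muM lam) E \<le> emeasure (muM lam) {\<alpha><..<\<beta>} \<Longrightarrow>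
       emeasure (wM w) E \<le> ennreal \<beta>0 * emeasure (wM w) {\<alpha><..<\<beta>}"
proof -
  have wm: "w \<in> borel_measurable borel" using w by (rule is_weight_meas)
  from A obtain r where r: "1 \<le> r" "A_tilde lam r w" unfolding Ainf_tilde_def by blast
  obtain C where C: "0 \<le> C" "\<And>a b. 0 \<le> a \<Longrightarrow> a < b \<Longrightarrow> w_meas w a b < \<infinity>" "KI lam r w C"
  proof (cases "r = 1")
    case True
    hence "A1_tilde lam w" using r(2) unfolding A_tilde_def by simp
    from A1_KI[OF lam w this] show ?thesis using that True by blast
  next
    case False
    hence "Ap_tilde lam r w" "1 < r" using r unfolding A_tilde_def by auto
    from Ap_KI[OF lam this(2) w this(1)] show ?thesis using that by blast
  qed
  from KI_Pw[OF lam r(1) C(1) C(3) wm C(2)] obtain \<beta>0 where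
    "0 \<le> \<beta>0" "\<beta>0 < 1" "\<And>\<alpha> \<beta> E. 0 \<le> \<alpha> \<Longrightarrow> \<alpha> < \<beta> \<Longrightarrow> E \<in> sets borel \<Longrightarrow> E \<subseteq> {\<alpha><..<\<beta>} \<Longrightarrow>
       2 * emeasure (muM lam) E \<le> emeasure (muM lam) {\<alpha><..<\<beta>} \<Longrightarrow>
       emeasure (wM w) E \<le> ennreal \<beta>0 * emeasure (wM w) {\<alpha><..<\<beta>}" by blast
  thus ?thesis using that C(2) by blast
qed

lemma epowr_le:
  assumes "Y \<le> ennreal B" "0 \<le> B" "0 < p"
  shows "epowr Y (1/p) \<le> ennreal (B powr (1/p))"
proof -
  have "Y \<noteq> \<infinity>" using assms(1) by (auto simp: top_unique)
  hence e: "epowr Y (1/p) = ennreal (enn2real Y powr (1/p))" unfolding epowr_def by simp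
  have "enn2real Y \<le> B" using enn2real_mono[OF assms(1)] assms(2) by simp
  hence "enn2real Y powr (1/p) \<le> B powr (1/p)" using assms(3) by (intro powr_mono2) auto
  thus ?thesis unfolding e by (rule ennreal_leI)
qed

lemma div_le_bound:
  fixes X W :: ennreal
  assumes "X \<le> ennreal K * W" "W < \<infinity>" "0 \<le> K"
  shows "X / W \<le> ennreal K"
proof (cases "W = 0")
  case True
  hence "X = 0" using assms(1) by simp
  thus ?thesis by simp
next
  case False
  thus ?thesis using assms by (intro divide_le_posI_ennreal) (auto simp: mult.commute zero_less_iff_neq_zero)
qed

lemma div_le_imp:
  fixes X m Y :: ennreal
  assumes "X / m \<le> Y" "m \<noteq> 0" "m < \<infinity>"
  shows "X \<le> Y * m"
proof -
  have "X = X / m * m" using assms(2,3) by (simp add: ennreal_divide_times)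
  also have "\<dots> \<le> Y * m" using assms(1) by (rule mult_right_mono) simp
  finally show ?thesis .
qed

lemma bmo_term_le:
  assumes "0 \<le> a" "a < b"
  shows "(\<integral>\<^sup>+ t\<in>{a<..<b}. ennreal (\<bar>f t - mu_avg lam f a b\<bar> * t powr (2*lam)) \<partial>lborel) / mu_meas lam a b
     \<le> bmo_delta_norm lam f"
  unfolding bmo_delta_norm_def using assms
  by (intro SUP_upper2[where i="(a,b)"]) auto

lemma lpw_term_le:
  assumes "0 \<le> a" "a < b"
  shows "epowr ((\<integral>\<^sup>+ t\<in>{a<..<b}. ennreal (\<bar>f t - mu_avg lam f a b\<bar> powr p * w t) \<partial>lborel) / w_meas w a b) (1/p)
     \<le> bmo_Lpw_norm lam p w f"
  unfolding bmo_Lpw_norm_def using assms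
  by (intro SUP_upper2[where i="(a,b)"]) auto

lemma locint_from_bound:
  assumes lam: "0 \<le> lam" and bm[measurable]: "f \<in> borel_measurable borel" and ab: "0 \<le> \<alpha>" "\<alpha> < \<beta>"
    and fin: "(\<integral>\<^sup>+ t\<in>{\<alpha><..<\<beta>}. ennreal (\<bar>f t - c\<bar> * t powr (2*lam)) \<partial>lborel) < \<infinity>"
  shows "set_integrable lborel {\<alpha><..<\<beta>} (\<lambda>t. f t * t powr (2*lam))"
  unfolding set_integrable_def
proof (rule integrableI_bounded)
  show "(\<lambda>x. indicator {\<alpha><..<\<beta>} x *\<^sub>R (f x * x powr (2*lam))) \<in> borel_measurable lborel" by measurable
  have "(\<integral>\<^sup>+x. ennreal (norm (indicator {\<alpha><..<\<beta>} x *\<^sub>R (f x * x powr (2*lam)))) \<partial>lborel)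
      \<le> (\<integral>\<^sup>+x. ennreal (\<bar>f x - c\<bar> * x powr (2*lam)) * indicator {\<alpha><..<\<beta>} x + ennreal \<bar>c\<bar> * (ennreal (x powr (2*lam)) * indicator {\<alpha><..<\<beta>} x) \<partial>lborel)"
  proof (intro nn_integral_mono)
    fix x
    have "\<bar>f x\<bar> \<le> \<bar>f x - c\<bar> + \<bar>c\<bar>" using abs_triangle_ineq[of "f x - c" c] by simp
    hence "\<bar>f x\<bar> * x powr (2*lam) \<le> (\<bar>f x - c\<bar> + \<bar>c\<bar>) * x powr (2*lam)"
      by (rule mult_right_mono) simp
    hence "\<bar>f x\<bar> * x powr (2*lam) \<le> \<bar>f x - c\<bar> * x powr (2*lam) + \<bar>c\<bar> * x powr (2*lam)"
      by (simp add: distrib_right)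
    hence "ennreal (\<bar>f x\<bar> * x powr (2*lam)) \<le> ennreal (\<bar>f x - c\<bar> * x powr (2*lam)) + ennreal \<bar>c\<bar> * ennreal (x powr (2*lam))"
      by (simp add: ennreal_mult[symmetric] ennreal_plus[symmetric] del: ennreal_plus)
    thus "ennreal (norm (indicator {\<alpha><..<\<beta>} x *\<^sub>R (f x * x powr (2*lam))))
      \<le> ennreal (\<bar>f x - c\<bar> * x powr (2*lam)) * indicator {\<alpha><..<\<beta>} x + ennreal \<bar>c\<bar> * (ennreal (x powr (2*lam)) * indicator {\<alpha><..<\<beta>} x)"
      by (cases "x \<in> {\<alpha><..<\<beta>}") (auto simp: abs_mult)
  qed
  also have "\<dots> = (\<integral>\<^sup>+ t\<in>{\<alpha><..<\<beta>}. ennreal (\<bar>f t - c\<bar> * t powr (2*lam)) \<partial>lborel) + ennreal \<bar>c\<bar> * mu_meas lam \<alpha> \<beta>"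
    unfolding mu_meas_def by (subst nn_integral_add) (auto simp: nn_integral_cmult)
  also have "\<dots> < \<infinity>" using fin mu_Ioo_finite[OF ab lam] by (simp add: ennreal_mult_less_top)
  finally show "(\<integral>\<^sup>+x. ennreal (norm (indicator {\<alpha><..<\<beta>} x *\<^sub>R (f x * x powr (2*lam)))) \<partial>lborel) < \<infinity>" .
qed

lemma Ssum_ge1:
  assumes "0 \<le> q" "q < 1"
  shows "1 \<le> Ssum q p"
proof -
  have "sum (\<lambda>k. (real k + 1) powr p * q^k) {0} \<le> Ssum q p"
    unfolding Ssum_def using summ_poly_geom[OF assms, of p] assms
    by (intro sum_le_suminf) auto
  thus ?thesis by simp
qed

context jn
begin

lemma int_fw:
  assumes ab: "0 \<le> a" "a < b" and wpos: "AE t in lborel. 0 < t \<longrightarrow> 0 < w t"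
    and fin: "w_meas w a b < \<infinity>"
  shows "set_integrable lborel {a<..<b} (\<lambda>t. f t * w t)"
  unfolding set_integrable_def
proof (rule integrableI_bounded)
  define c where "c = mu_avg lam f a b"
  define I where "I = {a<..<b}"
  show "(\<lambda>x. indicator {a<..<b} x *\<^sub>R (f x * w x)) \<in> borel_measurable lborel" by measurable
  have WI: "emeasure (wM w) I < \<infinity>" using fin unfolding I_def by (simp add: w_meas_eq)
  have X1: "(\<integral>\<^sup>+x\<in>I. ennreal (\<bar>f x - c\<bar> powr 1 * w x) \<partial>lborel)
     \<le> ennreal (cc powr 1 * Ssum \<beta>0 1) * emeasure (wM w) I"
    using Lp_bound[OF ab zero_less_one] unfolding I_def c_def .
  have "(\<integral>\<^sup>+x. ennreal (norm (indicator {a<..<b} x *\<^sub>R (f x * w x))) \<partial>lborel)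
     \<le> (\<integral>\<^sup>+x. ennreal (\<bar>f x - c\<bar> powr 1 * w x) * indicator I x + ennreal \<bar>c\<bar> * (ennreal (w x) * indicator I x) \<partial>lborel)"
  proof (intro nn_integral_mono_AE)
    show "AE x in lborel. ennreal (norm (indicator {a<..<b} x *\<^sub>R (f x * w x)))
        \<le> ennreal (\<bar>f x - c\<bar> powr 1 * w x) * indicator I x + ennreal \<bar>c\<bar> * (ennreal (w x) * indicator I x)"
      using wpos
    proof eventually_elim
      case (elim x)
      show ?case
      proof (cases "x \<in> I")
        case True
        hence "0 < x" unfolding I_def using ab by auto
        hence wx: "0 < w x" using elim by simp
        have "\<bar>f x\<bar> \<le> \<bar>f x - c\<bar> + \<bar>c\<bar>" using abs_triangle_ineq[of "f x - c" c] by simp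
        hence "\<bar>f x\<bar> * w x \<le> (\<bar>f x - c\<bar> + \<bar>c\<bar>) * w x" using wx by (intro mult_right_mono) auto
        hence "\<bar>f x * w x\<bar> \<le> \<bar>f x - c\<bar> * w x + \<bar>c\<bar> * w x" using wx by (simp add: abs_mult distrib_right)
        hence "ennreal \<bar>f x * w x\<bar> \<le> ennreal (\<bar>f x - c\<bar> * w x) + ennreal \<bar>c\<bar> * ennreal (w x)"
          using wx by (simp add: ennreal_mult[symmetric] ennreal_plus[symmetric] del: ennreal_plus)
        thus ?thesis using True by (simp add: I_def)
      qed (simp add: I_def)
    qed
  qed
  also have "\<dots> = (\<integral>\<^sup>+x\<in>I. ennreal (\<bar>f x - c\<bar> powr 1 * w x) \<partial>lborel) + ennreal \<bar>c\<bar> * emeasure (wM w) I"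
    unfolding wM_def I_def by (subst nn_integral_add) (auto simp: nn_integral_cmult emeasure_density)
  also have "\<dots> < \<infinity>" using X1 WI by (simp add: ennreal_mult_less_top le_less_trans)
  finally show "(\<integral>\<^sup>+x. ennreal (norm (indicator {a<..<b} x *\<^sub>R (f x * w x))) \<partial>lborel) < \<infinity>" .
qed

lemma term_bound:
  assumes ab: "0 \<le> a" "a < b" and p: "0 < p" and fin: "w_meas w a b < \<infinity>"
  shows "epowr ((\<integral>\<^sup>+ t\<in>{a<..<b}. ennreal (\<bar>f t - mu_avg lam f a b\<bar> powr p * w t) \<partial>lborel) / w_meas w a b) (1/p)
    \<le> ennreal (cc * Ssum \<beta>0 p powr (1/p))"
proof -
  have S0: "0 \<le> Ssum \<beta>0 p" using Ssum_ge1[OF beta, of p] by simp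
  have K0: "0 \<le> cc powr p * Ssum \<beta>0 p" using S0 by simp
  have "(\<integral>\<^sup>+ t\<in>{a<..<b}. ennreal (\<bar>f t - mu_avg lam f a b\<bar> powr p * w t) \<partial>lborel) / w_meas w a b
     \<le> ennreal (cc powr p * Ssum \<beta>0 p)"
    using Lp_bound[OF ab p] fin K0 unfolding w_meas_eq[OF wm] by (intro div_le_bound) auto
  hence "epowr ((\<integral>\<^sup>+ t\<in>{a<..<b}. ennreal (\<bar>f t - mu_avg lam f a b\<bar> powr p * w t) \<partial>lborel) / w_meas w a b) (1/p)
    \<le> ennreal ((cc powr p * Ssum \<beta>0 p) powr (1/p))"
    using K0 p by (rule epowr_le)
  also have "(cc powr p * Ssum \<beta>0 p) powr (1/p) = cc * Ssum \<beta>0 p powr (1/p)"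
    using cc_ge(2) p by (simp add: powr_mult powr_powr)
  finally show ?thesis .
qed

end

lemma X_fin_from_norm:
  assumes lam: "0 \<le> lam" and ab: "0 \<le> a" "a < b" and N: "bmo_delta_norm lam f < \<infinity>"
  shows "(\<integral>\<^sup>+ t\<in>{a<..<b}. ennreal (\<bar>f t - mu_avg lam f a b\<bar> * t powr (2*lam)) \<partial>lborel) < \<infinity>"
proof (rule ccontr)
  assume "\<not> ?thesis"
  hence top: "(\<integral>\<^sup>+ t\<in>{a<..<b}. ennreal (\<bar>f t - mu_avg lam f a b\<bar> * t powr (2*lam)) \<partial>lborel) = \<infinity>"
    by (simp add: not_less top_unique)
  have "mu_meas lam a b \<noteq> \<infinity>" using mu_Ioo_finite[OF ab lam] by simp
  hence "\<infinity> \<le> bmo_delta_norm lam f" using bmo_term_le[OF ab, of f lam] top by (simp add: ennreal_top_divide)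
  thus False using N by (simp add: top_unique)
qed

lemma partA:
  assumes lam: "0 < lam" and p: "0 < p" and w: "is_weight w" and A: "Ainf_tilde lam w"
  shows "\<exists>C>0. \<forall>b. BMO_delta lam b \<longrightarrow> BMO_Lpw lam p w b \<and> bmo_Lpw_norm lam p w b \<le> ennreal C * bmo_delta_norm lam b"
proof -
  have lam0: "0 \<le> lam" using lam by simp
  have wm[measurable]: "w \<in> borel_measurable borel" using w by (rule is_weight_meas)
  have wpos: "AE t in lborel. 0 < t \<longrightarrow> 0 < w t" using w unfolding is_weight_def by simp
  obtain \<beta>0 where b0: "0 \<le> \<beta>0" "\<beta>0 < 1" and fin: "\<And>a b. 0 \<le> a \<Longrightarrow> a < b \<Longrightarrow> w_meas w a b < \<infinity>"
    and Pw: "\<And>\<alpha> \<beta> E. 0 \<le> \<alpha> \<Longrightarrow> \<alpha> < \<beta> \<Longrightarrow> E \<in> sets borel \<Longrightarrow> E \<subseteq> {\<alpha><..<\<beta>} \<Longrightarrow>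
       2 * emeasure (muM lam) E \<le> emeasure (muM lam) {\<alpha><..<\<beta>} \<Longrightarrow>
       emeasure (wM w) E \<le> ennreal \<beta>0 * emeasure (wM w) {\<alpha><..<\<beta>}"
    using Ainf_weight[OF lam0 w A] by blast
  define S where "S = Ssum \<beta>0 p"
  have S1: "1 \<le> S" unfolding S_def using Ssum_ge1[OF b0] .
  define C where "C = (3 + 2 * Dc lam) * S powr (1/p)"
  have Cpos: "0 < C" unfolding C_def using S1 Dc_ge1[OF lam0] by (intro mult_pos_pos) auto
  show ?thesis
  proof (intro exI[of _ C] conjI allI impI Cpos)
    fix f assume B: "BMO_delta lam f"
    have fm[measurable]: "f \<in> borel_measurable borel" using B unfolding BMO_delta_def by simp
    have Nfin: "bmo_delta_norm lam f < \<infinity>" using B unfolding BMO_delta_def by simp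
    have locint: "set_integrable lborel {\<alpha><..<\<beta>} (\<lambda>t. f t * t powr (2*lam))"
      if "0 \<le> \<alpha>" "\<alpha> < \<beta>" for \<alpha> \<beta>
      using locint_from_bound[OF lam0 fm that X_fin_from_norm[OF lam0 that Nfin]] .
    have main: "bmo_Lpw_norm lam p w f \<le> ennreal (C * N') \<and>
        (\<forall>a b. 0 < a \<longrightarrow> a < b \<longrightarrow> set_integrable lborel {a<..<b} (\<lambda>t. f t * w t))"
      if N': "0 < N'" "bmo_delta_norm lam f \<le> ennreal N'" for N'
    proof -
      interpret J: jn lam f N' w \<beta>0
      proof (unfold_locales)
        show "0 \<le> lam" by (rule lam0)
        show "f \<in> borel_measurable borel" by (rule fm)
        show "w \<in> borel_measurable borel" by (rule wm)
        show "\<And>\<alpha> \<beta>. 0 \<le> \<alpha> \<Longrightarrow> \<alpha> < \<beta> \<Longrightarrow> set_integrable lborel {\<alpha><..<\<beta>} (\<lambda>t. f t * t powr (2*lam))"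
          by (rule locint)
        show "0 < N'" by (rule N'(1))
        show "0 \<le> \<beta>0" "\<beta>0 < 1" by (rule b0(1), rule b0(2))
        show "\<And>\<alpha> \<beta> E. 0 \<le> \<alpha> \<Longrightarrow> \<alpha> < \<beta> \<Longrightarrow> E \<in> sets borel \<Longrightarrow> E \<subseteq> {\<alpha><..<\<beta>} \<Longrightarrow>
          2 * emeasure (muM lam) E \<le> emeasure (muM lam) {\<alpha><..<\<beta>} \<Longrightarrow>
          emeasure (wM w) E \<le> ennreal \<beta>0 * emeasure (wM w) {\<alpha><..<\<beta>}" by (rule Pw)
        fix \<alpha> \<beta> :: real assume ab: "0 \<le> \<alpha>" "\<alpha> < \<beta>"
        have "(\<integral>\<^sup>+ t\<in>{\<alpha><..<\<beta>}. ennreal (\<bar>f t - mu_avg lam f \<alpha> \<beta>\<bar> * t powr (2*lam)) \<partial>lborel) / mu_meas lam \<alpha> \<beta>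
           \<le> ennreal N'" using bmo_term_le[OF ab, of f lam] N'(2) by (rule order_trans)
        hence "(\<integral>\<^sup>+ t\<in>{\<alpha><..<\<beta>}. ennreal (\<bar>f t - mu_avg lam f \<alpha> \<beta>\<bar> * t powr (2*lam)) \<partial>lborel)
           \<le> ennreal N' * mu_meas lam \<alpha> \<beta>"
          using mu_Ioo_pos[OF ab lam0] mu_Ioo_finite[OF ab lam0] by (intro div_le_imp) auto
        thus "(\<integral>\<^sup>+ t\<in>{\<alpha><..<\<beta>}. ennreal (\<bar>f t - mu_avg lam f \<alpha> \<beta>\<bar> * t powr (2*lam)) \<partial>lborel)
           \<le> ennreal N' * mu_meas lam \<alpha> \<beta>" .
      qed
      have cc: "J.cc * S powr (1/p) = C * N'" unfolding J.cc_def C_def by simp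
      have "bmo_Lpw_norm lam p w f \<le> ennreal (C * N')"
        unfolding bmo_Lpw_norm_def
      proof (intro SUP_least)
        fix B :: "real \<times> real" assume "B \<in> {(a,b). 0 \<le> a \<and> a < b}"
        then obtain a b where B: "B = (a,b)" "0 \<le> a" "a < b" by auto
        show "epowr ((\<integral>\<^sup>+ t\<in>{fst B<..<snd B}. ennreal (\<bar>f t - mu_avg lam f (fst B) (snd B)\<bar> powr p * w t) \<partial>lborel)
          / w_meas w (fst B) (snd B)) (1/p) \<le> ennreal (C * N')"
          using J.term_bound[OF B(2,3) p fin[OF B(2,3)]] unfolding B(1) S_def[symmetric] cc by simp
      qed
      moreover have "\<forall>a b. 0 < a \<longrightarrow> a < b \<longrightarrow> set_integrable lborel {a<..<b} (\<lambda>t. f t * w t)"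
        using J.int_fw wpos fin by (meson less_imp_le)
      ultimately show ?thesis by blast
    qed
    define N0 where "N0 = enn2real (bmo_delta_norm lam f)"
    have N0: "bmo_delta_norm lam f = ennreal N0" "0 \<le> N0" unfolding N0_def using Nfin by (auto simp: less_top)
    have m1: "bmo_Lpw_norm lam p w f \<le> ennreal (C * (N0 + 1))" "\<forall>a b. 0 < a \<longrightarrow> a < b \<longrightarrow> set_integrable lborel {a<..<b} (\<lambda>t. f t * w t)"
      using main[of "N0 + 1"] N0 by auto
    show "BMO_Lpw lam p w f" unfolding BMO_Lpw_def
      using m1 fm by (auto simp: le_less_trans)
    show "bmo_Lpw_norm lam p w f \<le> ennreal C * bmo_delta_norm lam f"
    proof (rule ennreal_le_epsilon)
      fix e :: real assume e: "0 < e"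
      define N' where "N' = N0 + e / C"
      have N'pos: "0 < N'" unfolding N'_def using N0 e Cpos by (simp add: add_nonneg_pos)
      have "bmo_delta_norm lam f \<le> ennreal N'" unfolding N0(1) N'_def using e Cpos by (intro ennreal_leI) simp
      hence "bmo_Lpw_norm lam p w f \<le> ennreal (C * N')" using main[OF N'pos] by blast
      also have "C * N' = C * N0 + e" unfolding N'_def using Cpos by (simp add: field_simps)
      also have "ennreal (C * N0 + e) = ennreal C * bmo_delta_norm lam f + ennreal e"
        unfolding N0(1) using Cpos N0(2) e by (simp add: ennreal_mult)
      finally show "bmo_Lpw_norm lam p w f \<le> ennreal C * bmo_delta_norm lam f + ennreal e" .
    qed
  qed
qed

lemma w_meas_pos:
  assumes w: "is_weight w" and ab: "0 \<le> a" "a < b"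
  shows "0 < w_meas w a b"
proof (rule ccontr)
  assume "\<not> 0 < w_meas w a b"
  hence z: "w_meas w a b = 0" by (simp add: zero_less_iff_neq_zero)
  have wm[measurable]: "w \<in> borel_measurable borel" using w by (rule is_weight_meas)
  have wpos: "AE t in lborel. 0 < t \<longrightarrow> 0 < w t" using w unfolding is_weight_def by simp
  have "AE t in lborel. ennreal (w t) * indicator {a<..<b} t = 0"
    using z unfolding w_meas_def by (subst nn_integral_0_iff_AE[symmetric]) auto
  hence "AE t in lborel. t \<notin> {a<..<b}" using wpos
    by eventually_elim (use ab in \<open>auto simp: indicator_def split: if_splits\<close>)
  hence "{a<..<b} \<in> null_sets lborel" by (subst AE_iff_null_sets) auto
  thus False using ab by auto
qed

definition coreB :: "real \<Rightarrow> real \<Rightarrow> (real \<Rightarrow> real) \<Rightarrow> real \<Rightarrow> bool" where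
  "coreB lam p w K \<longleftrightarrow> (\<forall>a b c f. 0 \<le> a \<longrightarrow> a < b \<longrightarrow> f \<in> borel_measurable borel \<longrightarrow>
     (\<integral>\<^sup>+t\<in>{a<..<b}. ennreal (\<bar>f t - c\<bar> powr p * w t) \<partial>lborel) < \<infinity> \<longrightarrow>
     (\<integral>\<^sup>+t\<in>{a<..<b}. ennreal (\<bar>f t - c\<bar> * t powr (2*lam)) \<partial>lborel)
       \<le> ennreal (K * enn2real (mu_meas lam a b)) * epowr ((\<integral>\<^sup>+t\<in>{a<..<b}. ennreal (\<bar>f t - c\<bar> powr p * w t) \<partial>lborel) / w_meas w a b) (1/p))"

lemma epowr_div_real:
  assumes "X < \<infinity>" "0 < W" "W < \<infinity>"
  shows "epowr (X / W) (1/p) = ennreal ((enn2real X / enn2real W) powr (1/p))"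
proof -
  have "X / W = ennreal (enn2real X / enn2real W)"
    using assms by (cases X; cases W) (auto simp: divide_ennreal)
  thus ?thesis unfolding epowr_def by simp
qed

lemma coreB_Ap:
  assumes lam: "0 \<le> lam" and p: "1 < p" and w: "is_weight w" and Ap: "Ap_tilde lam p w"
  obtains K where "0 < K" "\<And>a b. 0 \<le> a \<Longrightarrow> a < b \<Longrightarrow> w_meas w a b < \<infinity>" "coreB lam p w K"
proof -
  have wm[measurable]: "w \<in> borel_measurable borel" using w by (rule is_weight_meas)
  have wpos: "AE t in lborel. 0 < t \<longrightarrow> 0 < w t" using w unfolding is_weight_def by simp
  obtain C where C0: "0 \<le> C" and C: "\<And>a b. 0 \<le> a \<Longrightarrow> a < b \<Longrightarrow> w_meas w a b < \<infinity> \<and> sigw lam p w {a<..<b} < \<infinity> \<and>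
     enn2real (w_meas w a b) * enn2real (sigw lam p w {a<..<b}) powr (p-1) \<le> C * enn2real (mu_meas lam a b) powr p"
    using Ap_const[OF lam p Ap] by blast
  define K where "K = C powr (1/p) + 1"
  show ?thesis
  proof (rule that)
    show "0 < K" unfolding K_def by (simp add: add_nonneg_pos)
    show "\<And>a b. 0 \<le> a \<Longrightarrow> a < b \<Longrightarrow> w_meas w a b < \<infinity>" using C by blast
    show "coreB lam p w K" unfolding coreB_def
    proof (intro allI impI)
      fix a b c :: real and f :: "real \<Rightarrow> real"
      assume ab: "0 \<le> a" "a < b" and fm[measurable]: "f \<in> borel_measurable borel"
        and Xfin: "(\<integral>\<^sup>+t\<in>{a<..<b}. ennreal (\<bar>f t - c\<bar> powr p * w t) \<partial>lborel) < \<infinity>"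
      define X where "X = (\<integral>\<^sup>+t\<in>{a<..<b}. ennreal (\<bar>f t - c\<bar> powr p * w t) \<partial>lborel)"
      define X' where "X' = enn2real X"
      define W where "W = enn2real (w_meas w a b)"
      define S where "S = enn2real (sigw lam p w {a<..<b})"
      define m where "m = enn2real (mu_meas lam a b)"
      have Cab: "w_meas w a b < \<infinity>" "sigw lam p w {a<..<b} < \<infinity>" "W * S powr (p-1) \<le> C * m powr p"
        using C[OF ab] unfolding W_def S_def m_def by auto
      have Wpos: "0 < W" unfolding W_def using w_meas_pos[OF w ab] Cab(1)
        by (simp add: enn2real_positive_iff)
      have m0: "0 < m" unfolding m_def using mu_real[OF ab lam] by simp
      have nn: "0 \<le> X'" "0 \<le> S" unfolding X'_def S_def by auto
      have Ipos: "{a<..<b} \<subseteq> {0<..}" using ab by auto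
      have h1: "(\<integral>\<^sup>+x\<in>{a<..<b}. ennreal (\<bar>f x - c\<bar> * x powr (2*lam)) \<partial>lborel)
         \<le> ennreal (X' powr (1/p) * S powr (1 - 1/p))"
      proof -
        have hm: "(\<lambda>t. \<bar>f t - c\<bar>) \<in> borel_measurable borel" by measurable
        have Is: "{a<..<b} \<in> sets borel" by simp
        show ?thesis
          using holder_weight[OF p wm wpos hm abs_ge_zero Is Ipos Xfin Cab(2)] unfolding X'_def X_def S_def by simp
      qed
      have "S powr (1 - 1/p) = (S powr (p - 1)) powr (1/p)"
        using p by (simp add: powr_powr field_simps)
      also have "S powr (p - 1) \<le> C * m powr p / W" using Cab(3) Wpos by (simp add: field_simps)
      hence "(S powr (p - 1)) powr (1/p) \<le> (C * m powr p / W) powr (1/p)" using p by (intro powr_mono2) auto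
      also have "(C * m powr p / W) powr (1/p) = C powr (1/p) * m / W powr (1/p)"
        using p m0 C0 Wpos by (simp add: powr_mult powr_divide powr_powr)
      finally have Sb: "S powr (1 - 1/p) \<le> C powr (1/p) * m / W powr (1/p)" .
      have "X' powr (1/p) * S powr (1 - 1/p) \<le> X' powr (1/p) * (C powr (1/p) * m / W powr (1/p))"
        using Sb by (intro mult_left_mono) auto
      also have "\<dots> = C powr (1/p) * m * (X' / W) powr (1/p)"
        using Wpos by (simp add: powr_divide field_simps)
      also have "\<dots> \<le> K * m * (X' / W) powr (1/p)"
        unfolding K_def using m0 by (intro mult_right_mono) auto
      finally have h2: "X' powr (1/p) * S powr (1 - 1/p) \<le> K * m * (X' / W) powr (1/p)" .
      have K0: "0 \<le> K * m" unfolding K_def using m0 by simp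
      have ep: "epowr (X / w_meas w a b) (1/p) = ennreal ((X' / W) powr (1/p))"
        unfolding X'_def W_def using Xfin w_meas_pos[OF w ab] Cab(1) unfolding X_def by (intro epowr_div_real) auto
      show "(\<integral>\<^sup>+t\<in>{a<..<b}. ennreal (\<bar>f t - c\<bar> * t powr (2*lam)) \<partial>lborel)
       \<le> ennreal (K * enn2real (mu_meas lam a b)) * epowr ((\<integral>\<^sup>+t\<in>{a<..<b}. ennreal (\<bar>f t - c\<bar> powr p * w t) \<partial>lborel) / w_meas w a b) (1/p)"
        unfolding X_def[symmetric] ep m_def[symmetric]
        using h1 h2 K0 by (simp add: ennreal_mult[symmetric] order_trans ennreal_leI)
    qed
  qed
qed

lemma coreB_A1:
  assumes lam: "0 \<le> lam" and w: "is_weight w" and A1: "A1_tilde lam w"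
  obtains K where "0 < K" "\<And>a b. 0 \<le> a \<Longrightarrow> a < b \<Longrightarrow> w_meas w a b < \<infinity>" "coreB lam 1 w K"
proof -
  have wm[measurable]: "w \<in> borel_measurable borel" using w by (rule is_weight_meas)
  have wpos: "AE t in lborel. 0 < t \<longrightarrow> 0 < w t" using w unfolding is_weight_def by simp
  obtain C0 where C0: "0 \<le> C0" and fin: "\<And>a b. 0 \<le> a \<Longrightarrow> a < b \<Longrightarrow> w_meas w a b < \<infinity>"
    and pt: "\<And>a b. 0 \<le> a \<Longrightarrow> a < b \<Longrightarrow> AE x in lborel. x \<in> {a<..<b} \<longrightarrow>
        enn2real (w_meas w a b) / enn2real (mu_meas lam a b) * x powr (2*lam) \<le> C0 * w x"
    using A1_pt[OF lam w A1] by blast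
  define K where "K = C0 + 1"
  show ?thesis
  proof (rule that)
    show "0 < K" unfolding K_def using C0 by simp
    show "\<And>a b. 0 \<le> a \<Longrightarrow> a < b \<Longrightarrow> w_meas w a b < \<infinity>" by (rule fin)
    show "coreB lam 1 w K" unfolding coreB_def
    proof (intro allI impI)
      fix a b c :: real and f :: "real \<Rightarrow> real"
      assume ab: "0 \<le> a" "a < b" and fm[measurable]: "f \<in> borel_measurable borel"
        and Xfin: "(\<integral>\<^sup>+t\<in>{a<..<b}. ennreal (\<bar>f t - c\<bar> powr 1 * w t) \<partial>lborel) < \<infinity>"
      define X where "X = (\<integral>\<^sup>+t\<in>{a<..<b}. ennreal (\<bar>f t - c\<bar> powr 1 * w t) \<partial>lborel)"
      define X' where "X' = enn2real X"
      define W where "W = enn2real (w_meas w a b)"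
      define m where "m = enn2real (mu_meas lam a b)"
      have Wpos: "0 < W" unfolding W_def using w_meas_pos[OF w ab] fin[OF ab]
        by (simp add: enn2real_positive_iff)
      have m0: "0 < m" unfolding m_def using mu_real[OF ab lam] by simp
      have Xd: "X = ennreal X'" unfolding X'_def using Xfin unfolding X_def by (simp add: less_top)
      have X'0: "0 \<le> X'" unfolding X'_def by simp
      define L where "L = K * m / W"
      have L0: "0 \<le> L" unfolding L_def K_def using C0 m0 Wpos by simp
      have "(\<integral>\<^sup>+t\<in>{a<..<b}. ennreal (\<bar>f t - c\<bar> * t powr (2*lam)) \<partial>lborel)
          \<le> (\<integral>\<^sup>+t. ennreal L * (ennreal (\<bar>f t - c\<bar> powr 1 * w t) * indicator {a<..<b} t) \<partial>lborel)"
      proof (intro nn_integral_mono_AE)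
        show "AE t in lborel. ennreal (\<bar>f t - c\<bar> * t powr (2*lam)) * indicator {a<..<b} t
            \<le> ennreal L * (ennreal (\<bar>f t - c\<bar> powr 1 * w t) * indicator {a<..<b} t)"
          using pt[OF ab] wpos
        proof eventually_elim
          case (elim t)
          show ?case
          proof (cases "t \<in> {a<..<b}")
            case True
            hence t0: "0 < t" using ab by auto
            hence wt: "0 < w t" using elim(2) by simp
            have "W / m * t powr (2*lam) \<le> C0 * w t" using elim(1) True unfolding W_def m_def by simp
            also have "\<dots> \<le> K * w t" unfolding K_def using wt by simp
            finally have "t powr (2*lam) \<le> L * w t"
              unfolding L_def using Wpos m0 by (simp add: field_simps)
            hence "\<bar>f t - c\<bar> * t powr (2*lam) \<le> \<bar>f t - c\<bar> * (L * w t)" by (intro mult_left_mono) auto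
            hence "ennreal (\<bar>f t - c\<bar> * t powr (2*lam)) \<le> ennreal (L * (\<bar>f t - c\<bar> * w t))"
              by (intro ennreal_leI) (simp add: mult_ac)
            also have "\<dots> = ennreal L * ennreal (\<bar>f t - c\<bar> * w t)" using L0 by (rule ennreal_mult')
            finally show ?thesis using True by simp
          qed simp
        qed
      qed
      also have "\<dots> = ennreal L * X" unfolding X_def by (subst nn_integral_cmult) auto
      also have "\<dots> = ennreal (L * X')" unfolding Xd using ennreal_mult'[OF L0, of X'] by simp
      also have "L * X' = (K*m) * (X'/W)" unfolding L_def by simp
      also have "ennreal ((K*m) * (X'/W)) = ennreal (K * m) * ennreal (X' / W)"
        using C0 m0 unfolding K_def by (intro ennreal_mult') simp
      also have "ennreal (X' / W) = epowr (X / w_meas w a b) (1/1)"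
        using epowr_div_real[of X "w_meas w a b" 1] Xfin w_meas_pos[OF w ab] fin[OF ab] X'0 Wpos
        unfolding X_def X'_def W_def by (simp add: powr_one)
      finally show "(\<integral>\<^sup>+t\<in>{a<..<b}. ennreal (\<bar>f t - c\<bar> * t powr (2*lam)) \<partial>lborel)
       \<le> ennreal (K * enn2real (mu_meas lam a b)) * epowr ((\<integral>\<^sup>+t\<in>{a<..<b}. ennreal (\<bar>f t - c\<bar> powr 1 * w t) \<partial>lborel) / w_meas w a b) (1/1)"
        unfolding X_def m_def .
    qed
  qed
qed

lemma partB:
  assumes lam: "0 < lam" and p: "1 \<le> p" and w: "is_weight w" and A: "A_tilde lam p w"
  shows "\<exists>C>0. \<forall>b. BMO_Lpw lam p w b \<longrightarrow> BMO_delta lam b \<and> bmo_delta_norm lam b \<le> ennreal C * bmo_Lpw_norm lam p w b"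
proof -
  have lam0: "0 \<le> lam" using lam by simp
  have wm[measurable]: "w \<in> borel_measurable borel" using w by (rule is_weight_meas)
  obtain K where K: "0 < K" "\<And>a b. 0 \<le> a \<Longrightarrow> a < b \<Longrightarrow> w_meas w a b < \<infinity>" "coreB lam p w K"
  proof (cases "p = 1")
    case True
    hence "A1_tilde lam w" using A unfolding A_tilde_def by simp
    from coreB_A1[OF lam0 w this] show ?thesis using that True by blast
  next
    case False
    hence "Ap_tilde lam p w" "1 < p" using A p unfolding A_tilde_def by auto
    from coreB_Ap[OF lam0 this(2) w this(1)] show ?thesis using that by blast
  qed
  show ?thesis
  proof (intro exI[of _ K] conjI allI impI K(1))
    fix f assume B: "BMO_Lpw lam p w f"
    have fm[measurable]: "f \<in> borel_measurable borel" using B unfolding BMO_Lpw_def by simp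
    have Lfin: "bmo_Lpw_norm lam p w f < \<infinity>" using B unfolding BMO_Lpw_def by simp
    have step: "(\<integral>\<^sup>+ t\<in>{a<..<b}. ennreal (\<bar>f t - mu_avg lam f a b\<bar> * t powr (2*lam)) \<partial>lborel)
         \<le> ennreal (K * enn2real (mu_meas lam a b)) * bmo_Lpw_norm lam p w f \<and>
        (\<integral>\<^sup>+ t\<in>{a<..<b}. ennreal (\<bar>f t - mu_avg lam f a b\<bar> * t powr (2*lam)) \<partial>lborel) < \<infinity>"
      if ab: "0 \<le> a" "a < b" for a b
    proof -
      define c where "c = mu_avg lam f a b"
      define X where "X = (\<integral>\<^sup>+t\<in>{a<..<b}. ennreal (\<bar>f t - c\<bar> powr p * w t) \<partial>lborel)"
      have T: "epowr (X / w_meas w a b) (1/p) \<le> bmo_Lpw_norm lam p w f"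
        using lpw_term_le[OF ab, of f lam p w] unfolding X_def c_def .
      have Xfin: "X < \<infinity>"
      proof (rule ccontr)
        assume "\<not> X < \<infinity>"
        hence "X = \<infinity>" by (simp add: not_less top_unique)
        hence "X / w_meas w a b = \<infinity>" using K(2)[OF ab] by (simp add: ennreal_top_divide)
        hence "epowr (X / w_meas w a b) (1/p) = \<infinity>" unfolding epowr_def by simp
        thus False using T Lfin by (simp add: top_unique)
      qed
      have core: "(\<integral>\<^sup>+t\<in>{a<..<b}. ennreal (\<bar>f t - c\<bar> * t powr (2*lam)) \<partial>lborel)
         \<le> ennreal (K * enn2real (mu_meas lam a b)) * epowr (X / w_meas w a b) (1/p)"
        using K(3) ab fm Xfin unfolding coreB_def X_def by blast
      also have "\<dots> \<le> ennreal (K * enn2real (mu_meas lam a b)) * bmo_Lpw_norm lam p w f"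
        using T by (rule mult_left_mono) simp
      finally have le: "(\<integral>\<^sup>+t\<in>{a<..<b}. ennreal (\<bar>f t - c\<bar> * t powr (2*lam)) \<partial>lborel)
         \<le> ennreal (K * enn2real (mu_meas lam a b)) * bmo_Lpw_norm lam p w f" .
      moreover have "ennreal (K * enn2real (mu_meas lam a b)) * bmo_Lpw_norm lam p w f < \<infinity>"
        using Lfin by (simp add: ennreal_mult_less_top)
      ultimately show ?thesis unfolding c_def by (simp add: le_less_trans)
    qed
    have locint: "set_integrable lborel {a<..<b} (\<lambda>t. f t * t powr (2*lam))" if "0 \<le> a" "a < b" for a b
      using locint_from_bound[OF lam0 fm that] step[OF that] by blast
    have Nb: "bmo_delta_norm lam f \<le> ennreal K * bmo_Lpw_norm lam p w f"
      unfolding bmo_delta_norm_def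
    proof (intro SUP_least)
      fix B :: "real \<times> real" assume "B \<in> {(a,b). 0 \<le> a \<and> a < b}"
      then obtain a b where B: "B = (a,b)" "0 \<le> a" "a < b" by auto
      define m where "m = enn2real (mu_meas lam a b)"
      have md: "mu_meas lam a b = ennreal m" "0 < m" unfolding m_def using mu_real[OF B(2,3) lam0] by auto
      have "(\<integral>\<^sup>+ t\<in>{a<..<b}. ennreal (\<bar>f t - mu_avg lam f a b\<bar> * t powr (2*lam)) \<partial>lborel)
         \<le> ennreal m * (ennreal K * bmo_Lpw_norm lam p w f)"
        using step[OF B(2,3)] md K(1) unfolding m_def[symmetric] by (simp add: ennreal_mult mult_ac)
      hence "(\<integral>\<^sup>+ t\<in>{a<..<b}. ennreal (\<bar>f t - mu_avg lam f a b\<bar> * t powr (2*lam)) \<partial>lborel) / ennreal m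
         \<le> ennreal K * bmo_Lpw_norm lam p w f"
        using md(2) by (intro divide_le_posI_ennreal) auto
      thus "(\<integral>\<^sup>+ t\<in>{fst B<..<snd B}. ennreal (\<bar>f t - mu_avg lam f (fst B) (snd B)\<bar> * t powr (2*lam)) \<partial>lborel)
          / mu_meas lam (fst B) (snd B) \<le> ennreal K * bmo_Lpw_norm lam p w f"
        unfolding B(1) fst_conv snd_conv md(1) .
    qed
    show "BMO_delta lam f" unfolding BMO_delta_def
    proof (intro conjI allI impI)
      show "f \<in> borel_measurable lborel" using fm by simp
      show "set_integrable lborel {a<..<b} (\<lambda>t. f t * t powr (2*lam))" if "0 < a" "a < b" for a b
        using locint that by simp
      show "bmo_delta_norm lam f < \<infinity>" using Nb Lfin by (simp add: ennreal_mult_less_top le_less_trans)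
    qed
    show "bmo_delta_norm lam f \<le> ennreal K * bmo_Lpw_norm lam p w f" by (rule Nb)
  qed
qed

theorem lemma7p1:
  fixes lam :: real
  assumes "0 < lam"
  shows "(\<forall>p w. 0 < p \<longrightarrow> is_weight w \<longrightarrow> Ainf_tilde lam w \<longrightarrow>
            (\<exists>C>0. \<forall>b. BMO_delta lam b \<longrightarrow>
               BMO_Lpw lam p w b \<and> bmo_Lpw_norm lam p w b \<le> ennreal C * bmo_delta_norm lam b))
       \<and> (\<forall>p w. 1 \<le> p \<longrightarrow> is_weight w \<longrightarrow> A_tilde lam p w \<longrightarrow>
            (\<exists>C>0. \<forall>b. BMO_Lpw lam p w b \<longrightarrow>
               BMO_delta lam b \<and> bmo_delta_norm lam b \<le> ennreal C * bmo_Lpw_norm lam p w b))"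
  using partA[OF assms] partB[OF assms] by blast

end
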